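(* Let $f_c=S_0+\sum_{n\ge1}S_nS_0^{\,n+1}$, an element of the Schröder group $G_{\mathcal S}$, and let $g_c$ be its inverse in $G_{\mathcal S}$ for the composition $\circ$. Write $g_c=\eta\, S_0$ with $\eta\in\mathbb{C}\langle\langle S_0,S_1,\dots\rangle\rangle$, and define $\kappa:=\eta^{-1}S_0$, where $\eta^{-1}$ is the multiplicative inverse of $\eta$ in $\mathbb{C}\langle\langle S_0,S_1,\dots\rangle\rangle$. Then: (a) the image of $\kappa$ under the substitution $S_0\mapsto 1$, $S_n\mapsto S_n$ ($n\ge 1$) is the series $K=1+\sum_{n\ge1}K_n$ of $\widehat{\mathbf{Sym}}$; (b) for every $n\ge1$, the sum $\kappa_n$ of all terms of $\kappa$ of weight $n$ is $$\kappa_n=\sum_{t\in \mathrm{PST}_n}(-1)^{i(t)-1}S^t .$$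
   Context: A reduced plane tree is a rooted plane (ordered) tree in which every internal node has at least two children; the one-vertex tree (a single leaf) is allowed. Its degree is its number of leaves, its weight is the degree minus 1, and $i(t)$ denotes the number of internal nodes of $t$. Let $\mathbb{C}\langle\langle S_0,S_1,\dots\rangle\rangle$ be the algebra of formal (possibly infinite) linear combinations of words in noncommuting letters $S_0,S_1,\dots$ (products are well defined since a word has finitely many factorizations); the weight of a word $S_{i_1}\cdots S_{i_r}$ is $i_1+\dots+i_r$. To a reduced plane tree $t$ associate the word $S^t$ obtained by reading the nodes in preorder (root first, then the subtrees from left to right, recursively), writing $S_{k-1}$ for a node with $k$ children (so a leaf is $S_0$); the weight of $S^t$ equals the weight of $t$, and every $S^t$ ends with $S_0$. For trees $t_0$ with $n$ leaves and $t_1,\dots,t_n$, $t_0\circ(t_1,\dots,t_n)$ is the tree obtained by replacing the leaves of $t_0$, from left to right, by $t_1,\dots,t_n$; this is extended multilinearly to series. The Schröder group $G_{\mathcal S}$ is the set of series $p=S_0+\sum_{n\ge2}p_n$ with $p_n$ a finite linear combination of words $S^t$ for trees $t$ with $n$ leaves, with product $p\circ q=q+\sum_{n\ge2}p_n\circ(q,\dots,q)$; it is a group with identity $S_0$. A reduced plane tree with at least two leaves is prime if the rightmost child of its root is a leaf; $\mathrm{PST}_n$ is the set of prime reduced plane trees of weight $n$. $\mathbf{Sym}$ is the free associative algebra over $\mathbb{C}$ on $S_1,S_2,\dots$ ($\deg S_n=n$), $\widehat{\mathbf{Sym}}$ its completion, $S_0=1$, $\sigma_1=\sum_{n\ge0}S_n$,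 and $K_n$ are the unique homogeneous elements of degree $n$ with $K_0=1$ and $\sigma_1=\sum_{n\ge0}K_n\sigma_1^{\,n}$. *)

theory Defs
  imports "HOL-Analysis.Infinite_Sum"
begin

datatype rtree = Node "rtree list"

fun children :: "rtree \<Rightarrow> rtree list" where
  "children (Node ts) = ts"

fun reduced :: "rtree \<Rightarrow> bool" where
  "reduced (Node ts) = (ts = [] \<or> (2 \<le> length ts \<and> (\<forall>t\<in>set ts. reduced t)))"

fun leaves :: "rtree \<Rightarrow> nat" where
  "leaves (Node ts) = (if ts = [] then 1 else sum_list (map leaves ts))"

fun internal :: "rtree \<Rightarrow> nat" where
  "internal (Node ts) = (if ts = [] then 0 else 1 + sum_list (map internal ts))"

text \<open>Preorder word S^t: a node with k children gives the letter S_(k-1),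
  letters S_j are encoded by the natural number j.\<close>
fun tword :: "rtree \<Rightarrow> nat list" where
  "tword (Node ts) = (length ts - 1) # concat (map tword ts)"

text \<open>Grafting: replace the leaves of a tree, from left to right, by the trees
  of a list (consuming the list; returns the unused rest).\<close>
fun gr :: "rtree \<Rightarrow> rtree list \<Rightarrow> rtree \<times> rtree list"
and grl :: "rtree list \<Rightarrow> rtree list \<Rightarrow> rtree list \<times> rtree list" where
  "gr (Node []) ts = (case ts of [] \<Rightarrow> (Node [], []) | t # r \<Rightarrow> (t, r))"
| "gr (Node (c # cs)) ts = (case grl (c # cs) ts of (cs', r) \<Rightarrow> (Node cs', r))"
| "grl [] ts = ([], ts)"
| "grl (c # cs) ts = (case gr c ts of (c', r) \<Rightarrow> (case grl cs r of (cs', r') \<Rightarrow> (c' # cs', r')))"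

definition graft :: "rtree \<Rightarrow> rtree list \<Rightarrow> rtree" where
  "graft t0 ts = fst (gr t0 ts)"

definition prime_tree :: "rtree \<Rightarrow> bool" where
  "prime_tree t \<longleftrightarrow> reduced t \<and> 2 \<le> leaves t \<and> last (children t) = Node []"

definition PST :: "nat \<Rightarrow> rtree set" where
  "PST n = {t. prime_tree t \<and> leaves t - 1 = n}"

text \<open>A series is its coefficient function on words; the letter S_j is j.\<close>
type_synonym ncs = "nat list \<Rightarrow> complex"

definition nc_one :: ncs where
  "nc_one w = (if w = [] then 1 else 0)"

definition letter :: "nat \<Rightarrow> ncs" where
  "letter j w = (if w = [j] then 1 else 0)"

definition nc_mult :: "ncs \<Rightarrow> ncs \<Rightarrow> ncs" where
  "nc_mult a b w = (\<Sum>i\<le>length w. a (take i w) * b (drop i w))"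

fun nc_pow :: "ncs \<Rightarrow> nat \<Rightarrow> ncs" where
  "nc_pow a 0 = nc_one"
| "nc_pow a (Suc n) = nc_mult a (nc_pow a n)"

abbreviation weight :: "nat list \<Rightarrow> nat" where
  "weight w \<equiv> sum_list w"

definition schroder_group :: "ncs set" where
  "schroder_group = {p. p [0] = 1 \<and>
     (\<forall>w. p w \<noteq> 0 \<and> w \<noteq> [0] \<longrightarrow> (\<exists>t. reduced t \<and> 2 \<le> leaves t \<and> w = tword t)) \<and>
     (\<forall>n. finite {t. reduced t \<and> leaves t = n \<and> p (tword t) \<noteq> 0})}"

text \<open>p \<circ> q = q + sum_{n\<ge>2} p_n \<circ> (q,...,q), with the tree composition extended
  multilinearly (q being a combination of tree words S^t).\<close>
definition schroder_comp :: "ncs \<Rightarrow> ncs \<Rightarrow> ncs" where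
  "schroder_comp p q w = q w +
     (\<Sum>(t0, ts) \<in> {(t0, ts). reduced t0 \<and> 2 \<le> leaves t0 \<and> length ts = leaves t0 \<and>
                         (\<forall>t\<in>set ts. reduced t) \<and> tword (graft t0 ts) = w}.
        p (tword t0) * prod_list (map (\<lambda>t. q (tword t)) ts))"

definition f_c :: ncs where
  "f_c w = (if w = [0] \<or> (\<exists>n\<ge>1. w = n # replicate (n + 1) 0) then 1 else 0)"

section \<open>Noncommutative symmetric functions (completed): series in the letters
  S_1, S_2, ... (coefficient 0 on every word containing 0), with S_0 = 1\<close>

definition sigma1 :: ncs where
  "sigma1 w = (if w = [] \<or> (\<exists>n\<ge>1. w = [n]) then 1 else 0)"

text \<open>Kf n = K_n: homogeneous of degree n in Sym, K_0 = 1, and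
  sigma_1 = sum_n K_n sigma_1^n (the coefficient of a word w only receives
  contributions from n \<le> weight w).\<close>
definition is_K_family :: "(nat \<Rightarrow> ncs) \<Rightarrow> bool" where
  "is_K_family Kf \<longleftrightarrow> Kf 0 = nc_one \<and>
     (\<forall>n w. Kf n w \<noteq> 0 \<longrightarrow> weight w = n \<and> 0 \<notin> set w) \<and>
     (\<forall>w. sigma1 w = (\<Sum>n\<le>weight w. nc_mult (Kf n) (nc_pow sigma1 n) w))"

definition K_fam :: "nat \<Rightarrow> ncs" where
  "K_fam = (THE Kf. is_K_family Kf)"

definition K_series :: ncs where
  "K_series w = K_fam (weight w) w"

text \<open>Words in C<<S_0,S_1,...>> that map to the word u of Sym under S_0 \<mapsto> 1.\<close>
definition erase0 :: "nat list \<Rightarrow> nat list" where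
  "erase0 v = filter (\<lambda>x. x \<noteq> 0) v"

end

theory Submission
  imports Defs
begin



lemma sum_single_nz:
  assumes "finite A" "a \<in> A" "\<And>x. x \<in> A \<Longrightarrow> x \<noteq> a \<Longrightarrow> f x = 0"
  shows "sum f A = f a"
proof -
  have "sum f A = f a + sum f (A - {a})" using assms by (simp add: sum.remove)
  also have "sum f (A - {a}) = 0" using assms by (intro sum.neutral) auto
  finally show ?thesis by simp
qed

lemma sum_zero_nz:
  assumes "\<And>x. x \<in> A \<Longrightarrow> f x = 0"
  shows "sum f A = 0"
  using assms by (intro sum.neutral) auto

lemma tword_ne [simp]: "tword t \<noteq> []"
  by (cases t) auto

lemma reduced_children: "reduced (Node cs) \<Longrightarrow> c \<in> set cs \<Longrightarrow> reduced c"
  by auto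

lemma prefix_code:
  assumes "reduced t1" "reduced t2" "tword t1 @ r1 = tword t2 @ r2"
  shows "t1 = t2 \<and> r1 = r2"
  using assms
proof (induction t1 arbitrary: t2 r1 r2 rule: rtree.induct)
  case (Node cs1)
  obtain cs2 where t2: "t2 = Node cs2" by (cases t2)
  have L: "\<And>cs2 r1 r2. set cs \<subseteq> set cs1 \<Longrightarrow> (\<forall>c\<in>set cs2. reduced c) \<Longrightarrow> length cs = length cs2
      \<Longrightarrow> concat (map tword cs) @ r1 = concat (map tword cs2) @ r2 \<Longrightarrow> cs = cs2 \<and> r1 = r2" for cs
  proof (induction cs)
    case Nil thus ?case by simp
  next
    case (Cons c cs)
    then obtain c2 cs2' where cs2: "cs2 = c2 # cs2'" by (cases cs2) auto
    have cin: "c \<in> set cs1" using Cons.prems by auto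
    have rc: "reduced c" using Node.prems(1) cin by (cases cs1) auto
    have rc2: "reduced c2" using Cons.prems cs2 by auto
    have "tword c @ (concat (map tword cs) @ r1) = tword c2 @ (concat (map tword cs2') @ r2)"
      using Cons.prems cs2 by simp
    from Node.IH[OF cin rc rc2 this] have e: "c = c2" and e2: "concat (map tword cs) @ r1 = concat (map tword cs2') @ r2"
      by auto
    have "cs = cs2' \<and> r1 = r2"
      using Cons.IH[OF _ _ _ e2] Cons.prems cs2 by auto
    thus ?case using e cs2 by simp
  qed
  have h: "length cs1 - 1 = length cs2 - 1" and
       b: "concat (map tword cs1) @ r1 = concat (map tword cs2) @ r2"
    using Node.prems(3) t2 by auto
  have r2: "reduced (Node cs2)" using Node.prems(2) t2 by simp
  have len: "length cs1 = length cs2"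
  proof (cases "cs1 = []")
    case True
    then have "length cs2 - 1 = 0" using h by simp
    then show ?thesis using r2 True by (cases cs2) auto
  next
    case False
    then have "2 \<le> length cs1" using Node.prems(1) by auto
    moreover have "cs2 \<noteq> []" using h calculation by auto
    then have "2 \<le> length cs2" using r2 by auto
    ultimately show ?thesis using h by simp
  qed
  have "\<forall>c\<in>set cs2. reduced c" using r2 by (cases cs2) auto
  from L[OF _ this len b] show ?case using t2 by auto
qed

lemma tword_inj: "reduced t1 \<Longrightarrow> reduced t2 \<Longrightarrow> tword t1 = tword t2 \<Longrightarrow> t1 = t2"
  using prefix_code[of t1 t2 "[]" "[]"] by simp

lemma prefix_code_list:
  "(\<forall>c\<in>set cs1. reduced c) \<Longrightarrow> (\<forall>c\<in>set cs2. reduced c) \<Longrightarrow> length cs1 = length cs2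
      \<Longrightarrow> concat (map tword cs1) @ r1 = concat (map tword cs2) @ r2 \<Longrightarrow> cs1 = cs2 \<and> r1 = r2"
proof (induction cs1 arbitrary: cs2 r1 r2)
  case Nil thus ?case by simp
next
  case (Cons c cs)
  then obtain c2 cs2' where cs2: "cs2 = c2 # cs2'" by (cases cs2) auto
  have "tword c @ (concat (map tword cs) @ r1) = tword c2 @ (concat (map tword cs2') @ r2)"
    using Cons.prems cs2 by simp
  from prefix_code[OF _ _ this] Cons.prems cs2 have e: "c = c2" and e2: "concat (map tword cs) @ r1 = concat (map tword cs2') @ r2"
    by auto
  thus ?case using Cons.IH[OF _ _ _ e2] Cons.prems cs2 by auto
qed

definition cnt0 :: "nat list \<Rightarrow> nat" where
  "cnt0 v = length (filter (\<lambda>x. x = 0) v)"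

lemma cnt0_simps [simp]: "cnt0 [] = 0" "cnt0 (x # v) = (if x = 0 then Suc (cnt0 v) else cnt0 v)"
  "cnt0 (v @ w) = cnt0 v + cnt0 w"
  by (auto simp: cnt0_def)

lemma cnt0_concat: "cnt0 (concat vs) = sum_list (map cnt0 vs)"
  by (induction vs) auto

lemma weight_concat: "weight (concat vs) = sum_list (map sum_list vs)"
  by (induction vs) auto

lemma tword_cnt:
  "reduced t \<Longrightarrow> cnt0 (tword t) = leaves t \<and> weight (tword t) + 1 = leaves t"
proof (induction t rule: rtree.induct)
  case (Node cs)
  show ?case
  proof (cases "cs = []")
    case True thus ?thesis by simp
  next
    case False
    then have l2: "2 \<le> length cs" and rc: "\<forall>c\<in>set cs. reduced c" using Node.prems by auto
    have a: "sum_list (map (\<lambda>c. cnt0 (tword c)) cs) = sum_list (map leaves cs)"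
      using Node.IH rc by (intro arg_cong[where f=sum_list] map_cong) auto
    have b: "sum_list (map (\<lambda>c. weight (tword c) + 1) cs) = sum_list (map leaves cs)"
      using Node.IH rc by (intro arg_cong[where f=sum_list] map_cong) auto
    have c: "sum_list (map (\<lambda>c. weight (tword c) + 1) cs) = sum_list (map (\<lambda>c. weight (tword c)) cs) + length cs"
      by (induction cs) auto
    show ?thesis using False l2 a b c
      by (simp add: cnt0_concat weight_concat o_def)
  qed
qed

lemma length_split_cnt: "length v = cnt0 v + length (erase0 v)"
  by (induction v) (auto simp: erase0_def)

lemma weight_erase0 [simp]: "weight (erase0 v) = weight v"
  by (induction v) (auto simp: erase0_def)

lemma letter_le_weight: "x \<in> set v \<Longrightarrow> x \<le> weight v"
  by (induction v) auto

lemma length_le_cnt_weight: "length v \<le> cnt0 v + weight v"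
  by (induction v) auto

lemma finite_words_bound: "finite {v :: nat list. length v \<le> N \<and> (\<forall>x\<in>set v. x \<le> N)}"
proof -
  have "{v :: nat list. length v \<le> N \<and> (\<forall>x\<in>set v. x \<le> N)} = {xs. set xs \<subseteq> {..N} \<and> length xs \<le> N}"
    by auto
  thus ?thesis using finite_lists_length_le[of "{..N}" N] by simp
qed

lemma tword_len_ge: "Suc 0 \<le> length (tword t)"
  by (cases t) auto

lemma tword_letters: "x \<in> set (tword t) \<Longrightarrow> x < length (tword t)"
proof (induction t rule: rtree.induct)
  case (Node cs)
  have s: "length cs \<le> sum_list (map (\<lambda>c. length (tword c)) cs)"
  proof -
    have "length cs = sum_list (map (\<lambda>c. 1::nat) cs)" by (simp add: sum_list_triv)
    also have "\<dots> \<le> sum_list (map (\<lambda>c. length (tword c)) cs)"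
      by (rule sum_list_mono) (simp add: tword_len_ge)
    finally show ?thesis .
  qed
  show ?case
  proof (cases "x = length cs - 1")
    case True thus ?thesis using s by (simp add: length_concat o_def)
  next
    case False
    then obtain c where c: "c \<in> set cs" "x \<in> set (tword c)" using Node.prems by auto
    have "x < length (tword c)" using Node.IH c by auto
    moreover have "length (tword c) \<le> sum_list (map (\<lambda>c. length (tword c)) cs)"
      using c(1) by (simp add: member_le_sum_list)
    ultimately show ?thesis by (simp add: length_concat o_def)
  qed
qed

lemma finite_trees: "finite {t. reduced t \<and> length (tword t) \<le> N}"
proof -
  have "inj_on tword {t. reduced t \<and> length (tword t) \<le> N}"
    by (auto intro: inj_onI tword_inj)
  moreover have "tword ` {t. reduced t \<and> length (tword t) \<le> N} \<subseteq> {v. length v \<le> N \<and> (\<forall>x\<in>set v. x \<le> N)}"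
    using tword_letters by fastforce
  ultimately show ?thesis
    using finite_subset[OF _ finite_words_bound] finite_imageD by blast
qed

lemma leaves_le_len: "reduced t \<Longrightarrow> leaves t \<le> length (tword t)"
  using tword_cnt[of t] by (metis cnt0_def length_filter_le)




definition tmult :: "ncs \<Rightarrow> (nat list \<Rightarrow> ncs) \<Rightarrow> ncs" where
  "tmult F P w = (\<Sum>i\<le>length w. F (take i w) * P (take i w) (drop i w))"

lemma tmult_assoc:
  "tmult F (\<lambda>p. nc_mult (P p) c) = nc_mult (tmult F P) c"
proof (rule ext)
  fix w :: "nat list"
  define n where "n = length w"
  define g where "g j k = F (take j w) * P (take j w) (take k (drop j w)) * c (drop (j+k) w)" for j k
  have R: "nc_mult (tmult F P) c w = (\<Sum>k\<le>n. \<Sum>i\<le>k. g i (k - i))"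
    unfolding nc_mult_def tmult_def n_def
  proof (rule sum.cong[OF refl])
    fix k assume k: "k \<in> {..length w}"
    have "(\<Sum>i\<le>length (take k w). F (take i (take k w)) * P (take i (take k w)) (drop i (take k w))) * c (drop k w)
        = (\<Sum>i\<le>k. F (take i (take k w)) * P (take i (take k w)) (drop i (take k w)) * c (drop k w))"
      using k by (simp add: sum_distrib_right min_def)
    also have "\<dots> = (\<Sum>i\<le>k. g i (k - i))"
      by (rule sum.cong[OF refl]) (auto simp: g_def take_take drop_take min_def)
    finally show "(\<Sum>i\<le>length (take k w). F (take i (take k w)) * P (take i (take k w)) (drop i (take k w))) * c (drop k w) = (\<Sum>i\<le>k. g i (k - i))" .
  qed
  have L: "tmult F (\<lambda>p. nc_mult (P p) c) w = (\<Sum>j\<le>n. \<Sum>k\<le>n-j. g j k)"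
    unfolding nc_mult_def tmult_def n_def
  proof (rule sum.cong[OF refl])
    fix j assume j: "j \<in> {..length w}"
    show "F (take j w) * (\<Sum>i\<le>length (drop j w). P (take j w) (take i (drop j w)) * c (drop i (drop j w)))
        = (\<Sum>k\<le>length w - j. g j k)"
      by (simp add: sum_distrib_left g_def mult.assoc add.commute)
  qed
  have "(\<Sum>k\<le>n. \<Sum>i\<le>k. g i (k - i)) = (\<Sum>(i,j)\<in>{(i,j). i+j\<le>n}. g i j)"
    by (rule sum.triangle_reindex_eq[symmetric])
  also have "{(i,j). i+j \<le> n} = Sigma {..n} (\<lambda>i. {..n-i})" by auto
  also have "(\<Sum>(i,j)\<in>Sigma {..n} (\<lambda>i. {..n-i}). g i j) = (\<Sum>i\<le>n. \<Sum>j\<le>n-i. g i j)"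
    by (rule sum.Sigma[symmetric]) auto
  finally show "tmult F (\<lambda>p. nc_mult (P p) c) w = nc_mult (tmult F P) c w"
    using L R by simp
qed

lemma nc_mult_tmult: "nc_mult a b = tmult a (\<lambda>_. b)"
  by (simp add: fun_eq_iff nc_mult_def tmult_def)

lemma nc_mult_assoc: "nc_mult (nc_mult a b) c = nc_mult a (nc_mult b c)"
  using tmult_assoc[of a "\<lambda>_. b" c] by (simp add: nc_mult_tmult)

lemma nc_mult_Nil [simp]: "nc_mult F G [] = F [] * G []"
  by (simp add: nc_mult_def)

lemma nc_mult_Cons: "nc_mult F G (c # v) = F [] * G (c # v) + nc_mult (\<lambda>u. F (c # u)) G v"
  by (simp add: nc_mult_def sum.atMost_Suc_shift del: sum.atMost_Suc)

lemma tmult_Cons: "tmult F P (c # v) = F [] * P [] (c # v) + tmult (\<lambda>u. F (c # u)) (\<lambda>u. P (c # u)) v"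
  by (simp add: tmult_def sum.atMost_Suc_shift del: sum.atMost_Suc)

lemma tmult_Nil [simp]: "tmult F P [] = F [] * P [] []"
  by (simp add: tmult_def)

lemma nc_one_left [simp]: "nc_mult nc_one a = a"
proof (rule ext)
  fix w :: "nat list"
  have "nc_mult nc_one a w = (\<Sum>i\<le>length w. if i = 0 then a w else 0)"
    unfolding nc_mult_def nc_one_def by (rule sum.cong) auto
  thus "nc_mult nc_one a w = a w" by simp
qed

lemma nc_one_right [simp]: "nc_mult a nc_one = a"
proof (rule ext)
  fix w
  have "nc_mult a nc_one w = (\<Sum>i\<le>length w. if i = length w then a w else 0)"
    unfolding nc_mult_def nc_one_def by (rule sum.cong) auto
  thus "nc_mult a nc_one w = a w" by simp
qed

lemma nc_pow_add: "nc_pow a (m + n) = nc_mult (nc_pow a m) (nc_pow a n)"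
  by (induction m) (simp_all add: nc_mult_assoc)

lemma nc_pow_Suc': "nc_pow a (Suc n) = nc_mult (nc_pow a n) a"
  using nc_pow_add[of a n 1] by simp

lemma nc_mult_letter0: "nc_mult F (letter 0) (v @ [0]) = F v"
proof -
  have "nc_mult F (letter 0) (v @ [0]) = (\<Sum>i\<le>length (v @ [0]). F (take i (v @ [0])) * letter 0 (drop i (v @ [0])))"
    by (simp add: nc_mult_def)
  also have "\<dots> = F (take (length v) (v @ [0])) * letter 0 (drop (length v) (v @ [0]))"
  proof (rule sum_single_nz)
    fix i assume i: "i \<in> {..length (v @ [0])}" "i \<noteq> length v"
    have "drop i (v @ [0]) \<noteq> [0]"
    proof
      assume "drop i (v @ [0]) = [0]"
      then have "length (drop i (v @ [0])) = 1" by simp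
      then show False using i by simp
    qed
    then show "F (take i (v @ [0])) * letter 0 (drop i (v @ [0])) = 0" by (simp add: letter_def)
  qed auto
  finally show ?thesis by (simp add: letter_def)
qed

lemma nc_mult_letter0_z: "(\<And>v. w \<noteq> v @ [0]) \<Longrightarrow> nc_mult F (letter 0) w = 0"
proof -
  assume a: "\<And>v. w \<noteq> v @ [0]"
  have "letter 0 (drop i w) = 0" for i
  proof (rule ccontr)
    assume "letter 0 (drop i w) \<noteq> 0"
    then have "drop i w = [0]" by (simp add: letter_def split: if_splits)
    then have "w = take i w @ [0]" by (metis append_take_drop_id)
    then show False using a by blast
  qed
  thus ?thesis by (simp add: nc_mult_def)
qed




abbreviation sz :: "rtree \<Rightarrow> nat" where "sz t \<equiv> length (tword t)"

lemma leaves_Cons: "leaves (Node (c # cs)) = sum_list (map leaves (c # cs))"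
  by simp

lemma gr_len:
  "leaves t \<le> length ts \<longrightarrow> snd (gr t ts) = drop (leaves t) ts \<and>
     sz (fst (gr t ts)) + leaves t = sz t + sum_list (map sz (take (leaves t) ts))"
  "sum_list (map leaves cs) \<le> length ts \<longrightarrow> snd (grl cs ts) = drop (sum_list (map leaves cs)) ts \<and>
     sum_list (map sz (fst (grl cs ts))) + sum_list (map leaves cs) =
       sum_list (map sz cs) + sum_list (map sz (take (sum_list (map leaves cs)) ts))"
proof (induction t ts and cs ts rule: gr_grl.induct)
  case (1 ts)
  then show ?case by (cases ts) auto
next
  case (2 c cs ts)
  obtain cs' r where e: "grl (c # cs) ts = (cs', r)" by fastforce
  show ?case
  proof
    assume a: "leaves (Node (c # cs)) \<le> length ts"
    have "leaves (Node (c # cs)) = sum_list (map leaves (c # cs))" by simp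
    with 2 a e show "snd (gr (Node (c # cs)) ts) = drop (leaves (Node (c # cs))) ts \<and>
     sz (fst (gr (Node (c # cs)) ts)) + leaves (Node (c # cs)) = sz (Node (c # cs)) + sum_list (map sz (take (leaves (Node (c # cs))) ts))"
      by (simp add: length_concat o_def)
  qed
next
  case (3 ts)
  then show ?case by simp
next
  case (4 c cs ts)
  obtain c' r where e1: "gr c ts = (c', r)" by fastforce
  obtain cs' r' where e2: "grl cs r = (cs', r')" by fastforce
  show ?case
  proof
    assume a: "sum_list (map leaves (c # cs)) \<le> length ts"
    have i1: "r = drop (leaves c) ts" "sz c' + leaves c = sz c + sum_list (map sz (take (leaves c) ts))"
      using 4(1) a e1 by auto
    have lr: "sum_list (map leaves cs) \<le> length r" using a i1 by simp
    have i2: "r' = drop (sum_list (map leaves cs)) r"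
      "sum_list (map sz cs') + sum_list (map leaves cs) = sum_list (map sz cs) + sum_list (map sz (take (sum_list (map leaves cs)) r))"
      using 4(2)[OF e1[symmetric]] lr e2 by auto
    have tk: "take (leaves c + sum_list (map leaves cs)) ts = take (leaves c) ts @ take (sum_list (map leaves cs)) r"
      using i1 by (simp add: take_add)
    show "snd (grl (c # cs) ts) = drop (sum_list (map leaves (c # cs))) ts \<and>
     sum_list (map sz (fst (grl (c # cs) ts))) + sum_list (map leaves (c # cs)) =
       sum_list (map sz (c # cs)) + sum_list (map sz (take (sum_list (map leaves (c # cs))) ts))"
      using e1 e2 i1 i2 tk by (simp add: add.commute add.left_commute)
  qed
qed

lemma grl_rep: "k \<le> length ts \<Longrightarrow> grl (replicate k (Node [])) ts = (take k ts, drop k ts)"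
proof (induction k arbitrary: ts)
  case 0 then show ?case by simp
next
  case (Suc k)
  then obtain x r where "ts = x # r" by (cases ts) auto
  with Suc show ?case by simp
qed

declare sum_list_replicate[simp]

abbreviation corolla :: "nat \<Rightarrow> rtree" where "corolla k \<equiv> Node (replicate k (Node []))"

lemma graft_corolla: "1 \<le> length ts \<Longrightarrow> graft (corolla (length ts)) ts = Node ts"
proof -
  assume a: "1 \<le> length ts"
  then obtain k where k: "length ts = Suc k" by (cases "length ts") auto
  have "grl (replicate (length ts) (Node [])) ts = (ts, [])" using grl_rep[of "length ts" ts] by simp
  then show ?thesis using k by (simp add: graft_def)
qed

lemma leaves_corolla [simp]: "leaves (corolla k) = (if k = 0 then 1 else k)"
  by (induction k) (auto simp: sum_list_replicate)

lemma tword_corolla: "tword (corolla k) = (k - 1) # replicate k 0"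
  by (simp add: concat_replicate_single)

lemma reduced_corolla: "2 \<le> k \<Longrightarrow> reduced (corolla k)"
  by simp

lemma fc_corolla:
  assumes "reduced t0" "2 \<le> leaves t0" "f_c (tword t0) \<noteq> 0"
  shows "\<exists>n\<ge>1. t0 = corolla (n + 1)"
proof -
  have d: "tword t0 = [0] \<or> (\<exists>n\<ge>1. tword t0 = n # replicate (n + 1) 0)"
  proof (rule ccontr)
    assume "\<not> ?thesis"
    then have "f_c (tword t0) = 0" unfolding f_c_def by (simp only: if_False)
    then show False using assms(3) by simp
  qed
  show ?thesis
  proof (cases "tword t0 = [0]")
    case True
    then have "tword t0 = tword (Node [])" by simp
    then have "t0 = Node []" using tword_inj[OF assms(1), of "Node []"] by simp
    then show ?thesis using assms(2) by simp
  next
    case False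
    then obtain n where n: "n \<ge> 1" "tword t0 = n # replicate (n + 1) 0" using d by blast
    have rc: "reduced (corolla (n + 1))" using n(1) by (intro reduced_corolla) simp
    have "tword (corolla (n + 1)) = n # replicate (n + 1) 0" by (simp only: tword_corolla) simp
    then have "tword t0 = tword (corolla (n + 1))" using n(2) by simp
    then have "t0 = corolla (n + 1)" by (rule tword_inj[OF assms(1) rc])
    then show ?thesis using n(1) by blast
  qed
qed

lemma sum_sz_ge_len: "length ts \<le> sum_list (map sz ts)"
proof -
  have "length ts = sum_list (map (\<lambda>c. 1::nat) ts)" by (simp add: sum_list_triv)
  also have "\<dots> \<le> sum_list (map sz ts)" by (rule sum_list_mono) (simp add: tword_len_ge)
  finally show ?thesis .
qed

lemma sum_sz_ge_mem: "t \<in> set ts \<Longrightarrow> sz t + (length ts - 1) \<le> sum_list (map sz ts)"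
proof (induction ts)
  case Nil then show ?case by simp
next
  case (Cons a ts)
  show ?case
  proof (cases "t = a")
    case True
    then show ?thesis using sum_sz_ge_len[of ts] by simp
  next
    case False
    then have "t \<in> set ts" using Cons.prems by simp
    then have "sz t + (length ts - 1) \<le> sum_list (map sz ts)" using Cons.IH by simp
    moreover have "length ts \<ge> 1" using \<open>t \<in> set ts\<close> by (cases ts) auto
    moreover have "sz a \<ge> 1" using tword_len_ge[of a] by simp
    ultimately show ?thesis by simp
  qed
qed

abbreviation Sset :: "nat list \<Rightarrow> (rtree \<times> rtree list) set" where
  "Sset w \<equiv> {(t0, ts). reduced t0 \<and> 2 \<le> leaves t0 \<and> length ts = leaves t0 \<and>
                         (\<forall>t\<in>set ts. reduced t) \<and> tword (graft t0 ts) = w}"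

lemma Sset_finite: "finite (Sset w)"
proof -
  define N where "N = length w"
  define T where "T = {t. reduced t \<and> sz t \<le> N}"
  have fT: "finite T" unfolding T_def by (rule finite_trees)
  have "Sset w \<subseteq> T \<times> {ts. set ts \<subseteq> T \<and> length ts \<le> N}"
  proof
    fix p assume "p \<in> Sset w"
    then obtain t0 ts where p: "p = (t0, ts)" and r0: "reduced t0" and l0: "2 \<le> leaves t0"
      and lts: "length ts = leaves t0" and rts: "\<forall>t\<in>set ts. reduced t" and gw: "tword (graft t0 ts) = w"
      by blast
    have eq: "N + length ts = sz t0 + sum_list (map sz ts)"
      using gr_len(1)[of t0 ts] lts gw by (simp add: graft_def N_def)
    have h1: "sz t0 \<le> N" using eq sum_sz_ge_len[of ts] by simp
    have ll: "length ts \<le> sz t0" using leaves_le_len[OF r0] lts by simp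
    have h2: "sz t \<le> N" if "t \<in> set ts" for t
      using sum_sz_ge_mem[OF that] eq ll l0 lts by simp
    show "p \<in> T \<times> {ts. set ts \<subseteq> T \<and> length ts \<le> N}"
      using p r0 h1 h2 rts ll by (auto simp: T_def)
  qed
  moreover have "finite (T \<times> {ts. set ts \<subseteq> T \<and> length ts \<le> N})"
    using fT finite_lists_length_le[OF fT] by blast
  ultimately show ?thesis by (rule finite_subset)
qed

lemma prod_list_neg_pow: "prod_list (map (\<lambda>c. (-1::complex) ^ f c) cs) = (-1) ^ sum_list (map f cs)"
  by (induction cs) (auto simp: power_add)

lemma g_tree:
  assumes grp: "g \<in> schroder_group" and inv: "schroder_comp f_c g = letter 0"
  shows "reduced t \<Longrightarrow> g (tword t) = (-1) ^ internal t"
proof (induction t rule: rtree.induct)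
  case (Node cs)
  show ?case
  proof (cases "cs = []")
    case True
    then show ?thesis using grp by (simp add: schroder_group_def)
  next
    case False
    with Node.prems have l2: "2 \<le> length cs" and rcs: "\<forall>c\<in>set cs. reduced c" by auto
    let ?w = "tword (Node cs)"
    have wn: "?w \<noteq> [0]" using l2 by (cases cs) auto
    have "schroder_comp f_c g ?w = 0" using inv wn by (simp add: letter_def)
    then have eq: "g ?w + (\<Sum>(t0, ts) \<in> Sset ?w. f_c (tword t0) * prod_list (map (\<lambda>t. g (tword t)) ts)) = 0"
      unfolding schroder_comp_def by simp
    have lcs: "leaves (corolla (length cs)) = length cs" using l2 by (cases cs) (simp_all add: sum_list_replicate)
    have mem: "(corolla (length cs), cs) \<in> Sset ?w"
      using l2 rcs lcs graft_corolla[of cs] by auto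
    have "(\<Sum>(t0, ts) \<in> Sset ?w. f_c (tword t0) * prod_list (map (\<lambda>t. g (tword t)) ts))
          = (\<lambda>(t0, ts). f_c (tword t0) * prod_list (map (\<lambda>t. g (tword t)) ts)) (corolla (length cs), cs)"
    proof (rule sum_single_nz[OF Sset_finite mem])
      fix p assume pS: "p \<in> Sset ?w" and pn: "p \<noteq> (corolla (length cs), cs)"
      show "(\<lambda>(t0, ts). f_c (tword t0) * prod_list (map (\<lambda>t. g (tword t)) ts)) p = 0"
      proof (rule ccontr)
        assume nz: "(\<lambda>(t0, ts). f_c (tword t0) * prod_list (map (\<lambda>t. g (tword t)) ts)) p \<noteq> 0"
        obtain t0 ts where p: "p = (t0, ts)" by fastforce
        have r0: "reduced t0" and l0: "2 \<le> leaves t0" and lts: "length ts = leaves t0"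
          and rts: "\<forall>t\<in>set ts. reduced t" and gw: "tword (graft t0 ts) = ?w"
          using pS p by auto
        have "f_c (tword t0) \<noteq> 0" using nz p by auto
        then obtain n where n: "n \<ge> 1" "t0 = corolla (n + 1)" using fc_corolla r0 l0 by blast
        have lts': "length ts = n + 1" using lts n by simp
        have "graft t0 ts = Node ts" using graft_corolla[of ts] n lts' by simp
        then have "tword (Node ts) = tword (Node cs)" using gw by simp
        moreover have "reduced (Node ts)" using rts lts' n(1) by simp
        ultimately have "Node ts = Node cs" using tword_inj Node.prems by blast
        then have "ts = cs" by simp
        then show False using pn p n lts' by simp
      qed
    qed
    also have "\<dots> = prod_list (map (\<lambda>t. g (tword t)) cs)"
    proof -
      obtain m where m: "length cs = Suc m" "m \<ge> 1" using l2 by (cases "length cs") auto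
      have "tword (corolla (length cs)) = m # replicate (m+1) 0" using m by (simp add: tword_corolla)
      then have "f_c (tword (corolla (length cs))) = 1" using m(2) unfolding f_c_def by auto
      then show ?thesis by simp
    qed
    also have "\<dots> = prod_list (map (\<lambda>t. (-1) ^ internal t) cs)"
      using Node.IH rcs by (intro arg_cong[where f=prod_list] map_cong) auto
    also have "\<dots> = (-1) ^ sum_list (map internal cs)" by (rule prod_list_neg_pow)
    finally have "g ?w = - ((-1) ^ sum_list (map internal cs))" using eq by (simp add: add_eq_0_iff)
    then show ?thesis using False by simp
  qed
qed

lemma g_supp:
  assumes grp: "g \<in> schroder_group"
  shows "g w \<noteq> 0 \<Longrightarrow> \<exists>t. reduced t \<and> w = tword t"
proof -
  assume "g w \<noteq> 0"
  then show ?thesis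
  proof (cases "w = [0]")
    case True
    then show ?thesis by (intro exI[of _ "Node []"]) simp
  next
    case False
    with grp \<open>g w \<noteq> 0\<close> show ?thesis by (auto simp: schroder_group_def)
  qed
qed




lemma leaves_pos: "leaves t \<ge> 1"
proof (induction t rule: rtree.induct)
  case (Node ts)
  show ?case
  proof (cases ts)
    case Nil then show ?thesis by simp
  next
    case (Cons a l)
    then have "leaves a \<le> sum_list (map leaves ts)" by simp
    moreover have "leaves a \<ge> 1" using Node.IH Cons by simp
    ultimately show ?thesis using Cons by simp
  qed
qed

lemma pow_tree_yes:
  assumes supp: "\<And>w. F w \<noteq> 0 \<Longrightarrow> \<exists>t. reduced t \<and> w = tword t"
  shows "(\<forall>c\<in>set cs. reduced c) \<Longrightarrow> nc_pow F (length cs) (concat (map tword cs)) = prod_list (map (\<lambda>c. F (tword c)) cs)"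
proof (induction cs)
  case Nil then show ?case by (simp add: nc_one_def)
next
  case (Cons c cs)
  let ?w = "concat (map tword (c # cs))"
  let ?r = "concat (map tword cs)"
  have rc: "reduced c" using Cons.prems by simp
  have "nc_pow F (length (c # cs)) ?w = (\<Sum>i\<le>length ?w. F (take i ?w) * nc_pow F (length cs) (drop i ?w))"
    by (simp add: nc_mult_def)
  also have "\<dots> = F (take (length (tword c)) ?w) * nc_pow F (length cs) (drop (length (tword c)) ?w)"
  proof (rule sum_single_nz)
    fix i assume i: "i \<in> {..length ?w}" "i \<noteq> length (tword c)"
    show "F (take i ?w) * nc_pow F (length cs) (drop i ?w) = 0"
    proof (rule ccontr)
      assume "F (take i ?w) * nc_pow F (length cs) (drop i ?w) \<noteq> 0"
      then have "F (take i ?w) \<noteq> 0" by simp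
      then obtain t where t: "reduced t" "take i ?w = tword t" using supp by blast
      have "tword t @ drop i ?w = ?w" using t(2) append_take_drop_id[of i ?w] by simp
      also have "?w = tword c @ ?r" by simp
      finally have "tword t @ drop i ?w = tword c @ ?r" .
      then have "t = c" using prefix_code[OF t(1) rc] by blast
      then have "length (take i ?w) = length (tword c)" using t by simp
      then show False using i by simp
    qed
  qed auto
  also have "\<dots> = F (tword c) * prod_list (map (\<lambda>c. F (tword c)) cs)"
    using Cons by simp
  finally show ?case by simp
qed

lemma pow_tree_no:
  assumes supp: "\<And>w. F w \<noteq> 0 \<Longrightarrow> \<exists>t. reduced t \<and> w = tword t"
  shows "(\<nexists>cs. length cs = k \<and> (\<forall>c\<in>set cs. reduced c) \<and> w = concat (map tword cs)) \<Longrightarrow> nc_pow F k w = 0"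
proof (induction k arbitrary: w)
  case 0
  have "w \<noteq> []"
  proof
    assume "w = []"
    then have "\<exists>cs. length cs = 0 \<and> (\<forall>c\<in>set cs. reduced c) \<and> w = concat (map tword cs)"
      by (intro exI[of _ "[]"]) simp
    with 0 show False by (rule notE)
  qed
  then show ?case by (simp add: nc_one_def)
next
  case (Suc k)
  have "F (take i w) * nc_pow F k (drop i w) = 0" for i
  proof (rule ccontr)
    assume nz: "F (take i w) * nc_pow F k (drop i w) \<noteq> 0"
    have f1: "F (take i w) \<noteq> 0" using nz by auto
    have f2: "nc_pow F k (drop i w) \<noteq> 0" using nz by auto
    obtain t where t: "reduced t" "take i w = tword t" using supp[OF f1] by blast
    have "\<exists>cs. length cs = k \<and> (\<forall>c\<in>set cs. reduced c) \<and> drop i w = concat (map tword cs)"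
    proof (rule ccontr)
      assume "\<not> ?thesis"
      then have "nc_pow F k (drop i w) = 0" by (rule Suc.IH)
      then show False using f2 by contradiction
    qed
    then obtain cs where cs: "length cs = k" "\<forall>c\<in>set cs. reduced c" "drop i w = concat (map tword cs)"
      by blast
    have "w = concat (map tword (t # cs))" using t(2) cs(3) append_take_drop_id[of i w] by simp
    then have "length (t # cs) = Suc k \<and> (\<forall>c\<in>set (t # cs). reduced c) \<and> w = concat (map tword (t # cs))"
      using t cs by simp
    then show False using Suc.prems by blast
  qed
  then show ?case unfolding nc_pow.simps nc_mult_def by (intro sum.neutral ballI)
qed

lemma tword_0_leaf: "reduced t \<Longrightarrow> tword t = 0 # r \<Longrightarrow> r = []"
  by (cases t) (auto simp: length_Suc_conv)

definition kap :: ncs where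
  "kap w = (if w = [0] then 1 else 0) + (\<Sum>t\<in>{t. prime_tree t \<and> tword t = w}. (-1) ^ (internal t - 1))"

lemma prime_set_finite: "finite {t. prime_tree t \<and> tword t = w}"
  by (rule finite_subset[OF _ finite_trees[of "length w"]]) (auto simp: prime_tree_def)

lemma prime_word_start: "prime_tree t \<Longrightarrow> \<exists>m r. m \<ge> 1 \<and> tword t = m # r"
proof -
  assume p: "prime_tree t"
  obtain cs where t: "t = Node cs" by (cases t)
  have "cs \<noteq> []" using p t by (auto simp: prime_tree_def)
  then have "length cs \<ge> 2" using p t by (auto simp: prime_tree_def)
  then show ?thesis using t by auto
qed

lemma prime_tword:
  assumes p: "prime_tree (Node cs)"
  shows "tword (Node cs) = (length cs - 1) # concat (map tword (butlast cs)) @ [0]"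
proof -
  have ne: "cs \<noteq> []" using p by (auto simp: prime_tree_def)
  have l: "last cs = Node []" using p by (simp add: prime_tree_def)
  have cs_eq: "cs = butlast cs @ [Node []]" using ne l append_butlast_last_id[OF ne] by simp
  have "concat (map tword cs) = concat (map tword (butlast cs @ [Node []]))"
    by (rule arg_cong[where f="\<lambda>x. concat (map tword x)", OF cs_eq])
  also have "\<dots> = concat (map tword (butlast cs)) @ [0]" by simp
  finally show ?thesis by simp
qed

lemma prime_word_end: "prime_tree t \<Longrightarrow> \<exists>v. tword t = v @ [0]"
proof -
  assume p: "prime_tree t"
  obtain cs where t: "t = Node cs" by (cases t)
  show ?thesis using prime_tword[of cs] p t by auto
qed

lemma kap_0Cons: "v \<noteq> [] \<Longrightarrow> kap (0 # v) = 0"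
proof -
  assume v: "v \<noteq> []"
  have E: "{t. prime_tree t \<and> tword t = 0 # v} = {}"
    using prime_word_start by fastforce
  show ?thesis unfolding kap_def E using v by simp
qed

lemma kap_noend: "(\<And>v. w \<noteq> v @ [0]) \<Longrightarrow> kap w = 0"
proof -
  assume a: "\<And>v. w \<noteq> v @ [0]"
  have E: "{t. prime_tree t \<and> tword t = w} = {}"
    using prime_word_end a by fastforce
  have "w \<noteq> [0]" using a[of "[]"] by simp
  then show ?thesis unfolding kap_def E by simp
qed

lemma kap_single: "kap [0] = 1"
proof -
  have E: "{t. prime_tree t \<and> tword t = [0]} = {}"
    using prime_word_start by fastforce
  show ?thesis unfolding kap_def E by simp
qed

lemma kap_Cons:
  assumes supp: "\<And>w. F w \<noteq> 0 \<Longrightarrow> \<exists>t. reduced t \<and> w = tword t"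
    and Fval: "\<And>t. reduced t \<Longrightarrow> F (tword t) = (-1) ^ internal t"
    and m: "m \<ge> 1"
  shows "kap (m # v @ [0]) = nc_pow F m v"
proof (cases "\<exists>cs. length cs = m \<and> (\<forall>c\<in>set cs. reduced c) \<and> v = concat (map tword cs)")
  case True
  then obtain cs where cs: "length cs = m" "\<forall>c\<in>set cs. reduced c" "v = concat (map tword cs)" by blast
  define t0 where "t0 = Node (cs @ [Node []])"
  have tw: "tword t0 = m # v @ [0]" using cs by (simp add: t0_def)
  have r0: "reduced t0" using cs m by (auto simp: t0_def)
  have "leaves t0 \<ge> 2"
  proof -
    obtain c cs' where "cs = c # cs'" using cs m by (cases cs) auto
    then have "leaves t0 = leaves c + sum_list (map leaves cs') + 1" by (simp add: t0_def)
    then show ?thesis using leaves_pos[of c] by simp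
  qed
  then have p0: "prime_tree t0" using r0 by (simp add: prime_tree_def t0_def)
  have S: "{t. prime_tree t \<and> tword t = m # v @ [0]} = {t0}"
  proof
    show "{t0} \<subseteq> {t. prime_tree t \<and> tword t = m # v @ [0]}" using p0 tw by simp
    show "{t. prime_tree t \<and> tword t = m # v @ [0]} \<subseteq> {t0}"
    proof
      fix t assume "t \<in> {t. prime_tree t \<and> tword t = m # v @ [0]}"
      then have "prime_tree t" "tword t = tword t0" using tw by auto
      then show "t \<in> {t0}" using tword_inj r0 by (auto simp: prime_tree_def)
    qed
  qed
  have "kap (m # v @ [0]) = (-1) ^ (internal t0 - 1)"
    using S m by (simp add: kap_def)
  also have "internal t0 - 1 = sum_list (map internal cs)" by (simp add: t0_def)
  also have "(-1) ^ sum_list (map internal cs) = prod_list (map (\<lambda>c. F (tword c)) cs)"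
    using Fval cs(2) by (simp add: prod_list_neg_pow[symmetric] cong: map_cong)
  also have "\<dots> = nc_pow F m v" using pow_tree_yes[OF supp cs(2)] cs(1,3) by (simp del: nc_pow.simps)
  finally show ?thesis .
next
  case False
  then have z: "nc_pow F m v = 0" using pow_tree_no[OF supp] by blast
  have E: "{t. prime_tree t \<and> tword t = m # v @ [0]} = {}"
  proof (rule ccontr)
    assume "{t. prime_tree t \<and> tword t = m # v @ [0]} \<noteq> {}"
    then obtain t where p: "prime_tree t" "tword t = m # v @ [0]" by blast
    obtain cs where t: "t = Node cs" by (cases t)
    have ne: "cs \<noteq> []" using p t by (auto simp: prime_tree_def)
    have red: "\<forall>c\<in>set cs. reduced c" using p t ne by (auto simp: prime_tree_def)
    have "tword t = (length cs - 1) # concat (map tword (butlast cs)) @ [0]" using t prime_tword p by simp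
    then have e1: "length cs - 1 = m" and e2: "v = concat (map tword (butlast cs))" using p(2) by auto
    have "length (butlast cs) = m" using e1 by simp
    moreover have "\<forall>c\<in>set (butlast cs). reduced c" using red by (meson in_set_butlastD)
    ultimately show False using False e2 by blast
  qed
  show ?thesis unfolding kap_def E using z m by simp
qed

lemma left_inv_unique:
  assumes "F [] = 1" "nc_mult X F = nc_one" "nc_mult Y F = nc_one"
  shows "X = Y"
proof (rule ext)
  fix v :: "nat list"
  show "X v = Y v"
  proof (induction "length v" arbitrary: v rule: less_induct)
    case less
    have s0: "nc_mult X F v = nc_mult Y F v" using assms(2,3) by simp
    have s: "(\<Sum>i\<le>length v. X (take i v) * F (drop i v)) = (\<Sum>i\<le>length v. Y (take i v) * F (drop i v))"
      using s0 unfolding nc_mult_def .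
    have "(\<Sum>i<length v. X (take i v) * F (drop i v)) = (\<Sum>i<length v. Y (take i v) * F (drop i v))"
      by (rule sum.cong[OF refl]) (simp add: less)
    then show "X v = Y v" using s assms(1) by (simp add: lessThan_Suc_atMost[symmetric])
  qed
qed

locale setting =
  fixes g eta eta_inv kappa :: ncs
  assumes g_grp: "g \<in> schroder_group"
      and g_inv: "schroder_comp f_c g = letter 0"
      and eta: "g = nc_mult eta (letter 0)"
      and eta_inv: "nc_mult eta_inv eta = nc_one"
      and kappa: "kappa = nc_mult eta_inv (letter 0)"
begin

lemma gsupp: "g w \<noteq> 0 \<Longrightarrow> \<exists>t. reduced t \<and> w = tword t"
  using g_supp[OF g_grp] .

lemma gval: "reduced t \<Longrightarrow> g (tword t) = (-1) ^ internal t"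
  using g_tree[OF g_grp g_inv] .

lemma g_Cons: "m \<ge> 1 \<Longrightarrow> g (m # w) = - nc_pow g (Suc m) w"
proof (cases "\<exists>cs. length cs = Suc m \<and> (\<forall>c\<in>set cs. reduced c) \<and> w = concat (map tword cs)")
  case True
  assume m: "m \<ge> 1"
  then obtain cs where cs: "length cs = Suc m" "\<forall>c\<in>set cs. reduced c" "w = concat (map tword cs)" using True by blast
  have r: "reduced (Node cs)" using cs m by auto
  have "g (m # w) = g (tword (Node cs))" using cs by simp
  also have "\<dots> = (-1) ^ internal (Node cs)" using gval r by blast
  also have "\<dots> = - ((-1) ^ sum_list (map internal cs))" using cs m by (cases cs) auto
  also have "(-1) ^ sum_list (map internal cs) = prod_list (map (\<lambda>c. g (tword c)) cs)"
    unfolding prod_list_neg_pow[symmetric] using cs(2) gval by (intro arg_cong[where f=prod_list] map_cong) auto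
  then have "- ((-1) ^ sum_list (map internal cs)) = - prod_list (map (\<lambda>c. g (tword c)) cs)" by simp
  also have "\<dots> = - nc_pow g (Suc m) w" using pow_tree_yes[of g, OF gsupp cs(2)] cs(1,3) by (simp del: nc_pow.simps)
  finally show ?thesis .
next
  case False
  assume m: "m \<ge> 1"
  have z: "nc_pow g (Suc m) w = 0" using pow_tree_no[of g, OF gsupp] False by blast
  have "g (m # w) = 0"
  proof (rule ccontr)
    assume "g (m # w) \<noteq> 0"
    then obtain t where t: "reduced t" "m # w = tword t" using gsupp by blast
    obtain cs where tc: "t = Node cs" by (cases t)
    have "length cs - 1 = m" "w = concat (map tword cs)" using t tc by auto
    moreover have "cs \<noteq> []" using calculation m by auto
    then have "\<forall>c\<in>set cs. reduced c" using t tc by auto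
    moreover have "length cs = Suc m" using calculation(1) m by simp
    ultimately show False using False by blast
  qed
  then show ?thesis using z by simp
qed

lemma eta_val: "eta v = g (v @ [0])"
  using eta nc_mult_letter0 by simp

lemma eta_Nil: "eta [] = 1"
  using eta_val gval[of "Node []"] by simp

lemma eta_0Cons: "eta (0 # v) = 0"
proof (rule ccontr)
  assume "eta (0 # v) \<noteq> 0"
  then have "g (0 # v @ [0]) \<noteq> 0" using eta_val by simp
  then obtain t where t: "reduced t" "0 # v @ [0] = tword t" using gsupp by blast
  from tword_0_leaf[OF t(1) t(2)[symmetric]] show False by simp
qed

lemma eta_Cons: "m \<ge> 1 \<Longrightarrow> eta (m # v) = - nc_mult (nc_pow g m) eta v"
proof -
  assume m: "m \<ge> 1"
  have "eta (m # v) = - nc_pow g (Suc m) (v @ [0])" using eta_val g_Cons[OF m] by simp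
  also have "nc_pow g (Suc m) = nc_mult (nc_mult (nc_pow g m) eta) (letter 0)"
  proof -
    have "nc_pow g (Suc m) = nc_mult (nc_pow g m) g" by (rule nc_pow_Suc')
    also have "\<dots> = nc_mult (nc_pow g m) (nc_mult eta (letter 0))" by (simp only: eta[symmetric])
    also have "\<dots> = nc_mult (nc_mult (nc_pow g m) eta) (letter 0)" by (rule nc_mult_assoc[symmetric])
    finally show ?thesis .
  qed
  finally show ?thesis by (simp add: nc_mult_letter0)
qed

end




context setting begin

definition Bk :: ncs where "Bk v = kap (v @ [0])"

lemma Bk_Nil: "Bk [] = 1" by (simp add: Bk_def kap_single)
lemma Bk_0Cons: "Bk (0 # v) = 0" by (simp add: Bk_def kap_0Cons)
lemma Bk_Cons: "m \<ge> 1 \<Longrightarrow> Bk (m # v) = nc_pow g m v"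
  unfolding Bk_def using kap_Cons[of g, OF gsupp gval] by simp

lemma Bk_inv: "nc_mult Bk eta = nc_one"
proof (rule ext)
  fix w :: "nat list"
  show "nc_mult Bk eta w = nc_one w"
  proof (cases w)
    case Nil then show ?thesis by (simp add: Bk_Nil eta_Nil nc_one_def)
  next
    case (Cons c v)
    show ?thesis
    proof (cases "c = 0")
      case True
      have "nc_mult (\<lambda>u. Bk (c # u)) eta v = 0" using True by (simp add: Bk_0Cons nc_mult_def)
      then show ?thesis using Cons True by (simp add: nc_mult_Cons eta_0Cons nc_one_def)
    next
      case False
      then have m: "c \<ge> 1" by simp
      have "(\<lambda>u. Bk (c # u)) = nc_pow g c" using Bk_Cons[OF m] by auto
      then show ?thesis using Cons m by (simp add: nc_mult_Cons eta_Cons Bk_Nil nc_one_def)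
    qed
  qed
qed

lemma eta_inv_Bk: "eta_inv = Bk"
  using left_inv_unique[OF eta_Nil eta_inv Bk_inv] .

lemma kappa_kap: "kappa = kap"
proof (rule ext)
  fix w :: "nat list"
  show "kappa w = kap w"
  proof (cases "\<exists>v. w = v @ [0]")
    case True
    then obtain v where "w = v @ [0]" by blast
    then show ?thesis by (simp add: kappa eta_inv_Bk nc_mult_letter0 Bk_def)
  next
    case False
    have "kappa w = 0" unfolding kappa by (rule nc_mult_letter0_z) (use False in blast)
    moreover have "kap w = 0" by (rule kap_noend) (use False in blast)
    ultimately show ?thesis by simp
  qed
qed

lemma PST_finite: "finite (PST n)"
proof (rule finite_subset[OF _ finite_trees[of "2 * n + 1"]])
  show "PST n \<subseteq> {t. reduced t \<and> sz t \<le> 2 * n + 1}"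
  proof
    fix t assume "t \<in> PST n"
    then have p: "prime_tree t" "leaves t - 1 = n" by (auto simp: PST_def)
    have r: "reduced t" using p by (simp add: prime_tree_def)
    have l2: "leaves t \<ge> 2" using p by (simp add: prime_tree_def)
    have a: "sz t \<le> cnt0 (tword t) + weight (tword t)" by (rule length_le_cnt_weight)
    have b: "cnt0 (tword t) = leaves t" "weight (tword t) + 1 = leaves t" using tword_cnt[OF r] by auto
    have "sz t \<le> 2 * n + 1" using a b p(2) l2 by linarith
    then show "t \<in> {t. reduced t \<and> sz t \<le> 2 * n + 1}" using r by simp
  qed
qed

lemma part_b:
  assumes n: "n \<ge> 1" and w: "weight w = n"
  shows "kappa w = (\<Sum>t\<in>PST n. if tword t = w then (-1) ^ (internal t - 1) else 0)"
proof -
  have "(\<Sum>t\<in>PST n. if tword t = w then (-1) ^ (internal t - 1) else 0)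
        = (\<Sum>t\<in>{t \<in> PST n. tword t = w}. (-1) ^ (internal t - 1))"
    by (rule sum.inter_filter[OF PST_finite, symmetric])
  also have "{t \<in> PST n. tword t = w} = {t. prime_tree t \<and> tword t = w}"
  proof (intro set_eqI iffI)
    fix t assume "t \<in> {t. prime_tree t \<and> tword t = w}"
    then have p: "prime_tree t" "tword t = w" by auto
    have r: "reduced t" using p by (simp add: prime_tree_def)
    have "weight (tword t) + 1 = leaves t" using tword_cnt[OF r] by simp
    then show "t \<in> {t \<in> PST n. tword t = w}" using p w by (auto simp: PST_def)
  qed (auto simp: PST_def)
  finally have X: "(\<Sum>t\<in>PST n. if tword t = w then (-1) ^ (internal t - 1) else 0) = (\<Sum>t\<in>{t. prime_tree t \<and> tword t = w}. (-1) ^ (internal t - 1))" .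
  have w0: "w \<noteq> [0]" using n w by auto
  have "kappa w = (\<Sum>t\<in>{t. prime_tree t \<and> tword t = w}. (-1) ^ (internal t - 1))"
    unfolding kappa_kap kap_def using w0 by simp
  then show ?thesis by (rule trans[OF _ X[symmetric]])
qed

end




definition Zs :: "nat \<Rightarrow> nat list \<Rightarrow> nat list set" where
  "Zs c u = {v. erase0 v = u \<and> cnt0 v = weight u + c}"

definition th :: "nat \<Rightarrow> ncs \<Rightarrow> ncs" where
  "th c F u = (\<Sum>v\<in>Zs c u. F v)"

definition supp :: "nat \<Rightarrow> ncs \<Rightarrow> bool" where
  "supp c F \<longleftrightarrow> (\<forall>v. F v \<noteq> 0 \<longrightarrow> cnt0 v = weight v + c)"

lemma erase0_append: "erase0 (a @ b) = erase0 a @ erase0 b"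
  by (simp add: erase0_def)

lemma erase0_Nil [simp]: "erase0 [] = []"
  by (simp add: erase0_def)

lemma erase0_Cons: "erase0 (x # v) = (if x = 0 then erase0 v else x # erase0 v)"
  by (simp add: erase0_def)

lemma zero_notin_erase0: "0 \<notin> set (erase0 v)"
  by (simp add: erase0_def)

lemma Zs_finite: "finite (Zs c u)"
proof (rule finite_subset[OF _ finite_words_bound[of "length u + weight u + c"]])
  show "Zs c u \<subseteq> {v. length v \<le> length u + weight u + c \<and> (\<forall>x\<in>set v. x \<le> length u + weight u + c)}"
  proof
    fix v assume v: "v \<in> Zs c u"
    then have e: "erase0 v = u" "cnt0 v = weight u + c" by (auto simp: Zs_def)
    have "length v = cnt0 v + length (erase0 v)" by (rule length_split_cnt)
    then have l: "length v = weight u + c + length u" using e by simp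
    have "x \<le> weight u" if "x \<in> set v" for x
    proof -
      have "x \<le> weight v" using that by (rule letter_le_weight)
      also have "weight v = weight (erase0 v)" by simp
      finally show ?thesis using e by simp
    qed
    then show "v \<in> {v. length v \<le> length u + weight u + c \<and> (\<forall>x\<in>set v. x \<le> length u + weight u + c)}"
      using l by fastforce
  qed
qed

lemma cnt0_take_drop: "cnt0 v = cnt0 (take i v) + cnt0 (drop i v)"
  using cnt0_simps(3)[of "take i v" "drop i v"] by simp

lemma weight_take_drop: "weight v = weight (take i v) + weight (drop i v)"
  using sum_list_append[of "take i v" "drop i v"] by simp

lemma th_mult:
  assumes sF: "supp c1 F" and sG: "supp c2 G"
  shows "th (c1 + c2) (nc_mult F G) u = nc_mult (th c1 F) (th c2 G) u"
proof -
  define Z where "Z = Zs (c1+c2) u"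
  define Sg where "Sg = Sigma Z (\<lambda>v. {..length v})"
  define h where "h = (\<lambda>(v :: nat list, i :: nat). (take i v, drop i v))"
  define f where "f = (\<lambda>(a, b). F a * G b)"
  define U where "U = (\<Union>j\<in>{..length u}. Zs c1 (take j u) \<times> Zs c2 (drop j u))"
  have fZ: "finite Z" by (simp add: Z_def Zs_finite)
  have fSg: "finite Sg" using fZ by (simp add: Sg_def)
  have inj: "inj_on h Sg"
  proof (rule inj_onI)
    fix x y assume x: "x \<in> Sg" and y: "y \<in> Sg" and e: "h x = h y"
    obtain v i where xv: "x = (v, i)" by fastforce
    obtain v' i' where yv: "y = (v', i')" by fastforce
    have i: "i \<le> length v" using x xv by (simp add: Sg_def)
    have i': "i' \<le> length v'" using y yv by (simp add: Sg_def)
    have t: "take i v = take i' v'" and d: "drop i v = drop i' v'" using e xv yv by (auto simp: h_def)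
    have "v = v'" using t d append_take_drop_id[of i v] append_take_drop_id[of i' v'] by simp
    moreover have "i = i'" using t i i' by (metis length_take min.absorb2)
    ultimately show "x = y" using xv yv by simp
  qed
  have "th (c1+c2) (nc_mult F G) u = (\<Sum>v\<in>Z. \<Sum>i\<le>length v. F (take i v) * G (drop i v))"
    by (simp add: th_def nc_mult_def Z_def)
  also have "\<dots> = (\<Sum>(v,i)\<in>Sg. F (take i v) * G (drop i v))"
    unfolding Sg_def by (rule sum.Sigma) (auto simp: fZ)
  also have "\<dots> = sum (f \<circ> h) Sg"
    by (rule sum.cong) (auto simp: f_def h_def)
  also have "\<dots> = sum f (h ` Sg)"
    by (rule sum.reindex[OF inj, symmetric])
  also have "\<dots> = sum f U"
  proof (rule sum.mono_neutral_right)
    show "finite (h ` Sg)" using fSg by simp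
    show "U \<subseteq> h ` Sg"
    proof
      fix p assume "p \<in> U"
      then obtain j a b where j: "j \<le> length u" and p: "p = (a, b)" and a: "a \<in> Zs c1 (take j u)"
        and b: "b \<in> Zs c2 (drop j u)" by (auto simp: U_def)
      have ea: "erase0 a = take j u" "cnt0 a = weight (take j u) + c1" using a by (auto simp: Zs_def)
      have eb: "erase0 b = drop j u" "cnt0 b = weight (drop j u) + c2" using b by (auto simp: Zs_def)
      have "erase0 (a @ b) = u" using ea eb by (simp add: erase0_append)
      moreover have "cnt0 (a @ b) = weight u + (c1 + c2)"
        using ea eb weight_take_drop[of u j] by simp
      ultimately have "a @ b \<in> Z" by (simp add: Z_def Zs_def)
      then have "(a @ b, length a) \<in> Sg" by (simp add: Sg_def)
      moreover have "h (a @ b, length a) = p" using p by (simp add: h_def)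
      ultimately show "p \<in> h ` Sg" by (metis image_eqI)
    qed
    show "\<forall>p\<in>h ` Sg - U. f p = 0"
    proof
      fix p assume pp: "p \<in> h ` Sg - U"
      then obtain x where x: "x \<in> Sg" "p = h x" by blast
      obtain v i where xv: "x = (v, i)" by fastforce
      have vZ: "v \<in> Z" and i: "i \<le> length v" using x xv by (auto simp: Sg_def)
      define a where "a = take i v"
      define b where "b = drop i v"
      have p: "p = (a, b)" using x xv by (simp add: h_def a_def b_def)
      have vab: "v = a @ b" by (simp add: a_def b_def)
      show "f p = 0"
      proof (rule ccontr)
        assume "f p \<noteq> 0"
        then have fa: "F a \<noteq> 0" and gb: "G b \<noteq> 0" using p by (auto simp: f_def)
        have ca: "cnt0 a = weight a + c1" using sF fa by (simp add: supp_def)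
        have cb: "cnt0 b = weight b + c2" using sG gb by (simp add: supp_def)
        have eu: "erase0 a @ erase0 b = u" using vZ vab by (simp add: Z_def Zs_def erase0_append)
        define j where "j = length (erase0 a)"
        have j: "j \<le> length u" using eu by (auto simp: j_def)
        have tj: "take j u = erase0 a" and dj: "drop j u = erase0 b" using eu by (auto simp: j_def)
        have "a \<in> Zs c1 (take j u)" using tj ca by (simp add: Zs_def)
        moreover have "b \<in> Zs c2 (drop j u)" using dj cb by (simp add: Zs_def)
        ultimately have "p \<in> U" using j p by (auto simp: U_def)
        then show False using pp by blast
      qed
    qed
  qed
  also have "\<dots> = (\<Sum>j\<le>length u. sum f (Zs c1 (take j u) \<times> Zs c2 (drop j u)))"
    unfolding U_def
  proof (rule sum.UNION_disjoint)
    show "finite {..length u}" by simp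
    show "\<forall>j\<in>{..length u}. finite (Zs c1 (take j u) \<times> Zs c2 (drop j u))"
      by (simp add: Zs_finite)
    show "\<forall>j\<in>{..length u}. \<forall>k\<in>{..length u}. j \<noteq> k \<longrightarrow>
      (Zs c1 (take j u) \<times> Zs c2 (drop j u)) \<inter> (Zs c1 (take k u) \<times> Zs c2 (drop k u)) = {}"
    proof (intro ballI impI)
      fix j k assume j: "j \<in> {..length u}" and k: "k \<in> {..length u}" and jk: "j \<noteq> k"
      show "(Zs c1 (take j u) \<times> Zs c2 (drop j u)) \<inter> (Zs c1 (take k u) \<times> Zs c2 (drop k u)) = {}"
      proof (rule ccontr)
        assume "\<not> ?thesis"
        then obtain a b where "(a, b) \<in> Zs c1 (take j u) \<times> Zs c2 (drop j u)"
          "(a, b) \<in> Zs c1 (take k u) \<times> Zs c2 (drop k u)" by blast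
        then have "erase0 a = take j u" "erase0 a = take k u" by (auto simp: Zs_def)
        then have "length (take j u) = length (take k u)" by simp
        then show False using j k jk by simp
      qed
    qed
  qed
  also have "\<dots> = nc_mult (th c1 F) (th c2 G) u"
    unfolding nc_mult_def th_def
  proof (rule sum.cong[OF refl])
    fix j
    show "sum f (Zs c1 (take j u) \<times> Zs c2 (drop j u)) = sum F (Zs c1 (take j u)) * sum G (Zs c2 (drop j u))"
      unfolding f_def sum_product by (rule sum.cartesian_product[symmetric])
  qed
  finally show ?thesis .
qed

lemma supp_mult:
  assumes sF: "supp c1 F" and sG: "supp c2 G"
  shows "supp (c1 + c2) (nc_mult F G)"
  unfolding supp_def
proof (intro allI impI)
  fix v assume "nc_mult F G v \<noteq> 0"
  then obtain i where "F (take i v) * G (drop i v) \<noteq> 0"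
    unfolding nc_mult_def by (meson sum.not_neutral_contains_not_neutral)
  then have "F (take i v) \<noteq> 0" "G (drop i v) \<noteq> 0" by auto
  then have "cnt0 (take i v) = weight (take i v) + c1" "cnt0 (drop i v) = weight (drop i v) + c2"
    using sF sG by (auto simp: supp_def)
  then show "cnt0 v = weight v + (c1 + c2)"
    using cnt0_take_drop[of v i] weight_take_drop[of v i] by simp
qed

lemma supp_one: "supp 0 nc_one"
  by (simp add: supp_def nc_one_def)

lemma supp_letter0: "supp 1 (letter 0)"
  by (simp add: supp_def letter_def)

lemma supp_pow: "supp c F \<Longrightarrow> supp (k * c) (nc_pow F k)"
proof (induction k)
  case 0 then show ?case by (simp add: supp_one)
next
  case (Suc k)
  then show ?case using supp_mult[OF Suc.prems Suc.IH[OF Suc.prems]] by (simp add: add.commute)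
qed

lemma th_one: "th 0 nc_one = nc_one"
proof (rule ext)
  fix u :: "nat list"
  have "th 0 nc_one u = (\<Sum>v\<in>Zs 0 u. if v = [] then 1 else 0)" by (simp add: th_def nc_one_def)
  also have "\<dots> = (if [] \<in> Zs 0 u then 1 else 0)" by (simp add: Zs_finite)
  also have "\<dots> = nc_one u" by (auto simp: Zs_def nc_one_def)
  finally show "th 0 nc_one u = nc_one u" .
qed

lemma th_letter0: "th 1 (letter 0) = nc_one"
proof (rule ext)
  fix u :: "nat list"
  have "th 1 (letter 0) u = (\<Sum>v\<in>Zs 1 u. if v = [0] then 1 else 0)" by (simp add: th_def letter_def)
  also have "\<dots> = (if [0] \<in> Zs 1 u then 1 else 0)" by (simp add: Zs_finite)
  also have "\<dots> = nc_one u" by (auto simp: Zs_def nc_one_def erase0_def)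
  finally show "th 1 (letter 0) u = nc_one u" .
qed

lemma th_pow: "supp c F \<Longrightarrow> th (k * c) (nc_pow F k) = nc_pow (th c F) k"
proof (induction k)
  case 0 then show ?case by (simp add: th_one)
next
  case (Suc k)
  have "th (Suc k * c) (nc_pow F (Suc k)) = th (c + k * c) (nc_mult F (nc_pow F k))" by simp
  also have "\<dots> = nc_mult (th c F) (th (k * c) (nc_pow F k))"
    by (rule ext, rule th_mult[OF Suc.prems supp_pow[OF Suc.prems]])
  also have "\<dots> = nc_pow (th c F) (Suc k)" using Suc by simp
  finally show ?case .
qed

lemma th_neg: "th c (\<lambda>v. - F v) u = - th c F u"
  by (simp add: th_def sum_negf)

lemma th_0Cons: "th c F (0 # u) = 0"
proof -
  have "Zs c (0 # u) = {}"
  proof (rule equals0I)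
    fix v assume "v \<in> Zs c (0 # u)"
    then have "erase0 v = 0 # u" by (simp add: Zs_def)
    then show False using zero_notin_erase0[of v] by simp
  qed
  then show ?thesis by (simp add: th_def)
qed

lemma erase0_Nil_rep: "erase0 v = [] \<Longrightarrow> v = replicate (cnt0 v) 0"
  by (induction v) (auto simp: erase0_def split: if_splits)

lemma Zs0_Nil: "Zs 0 [] = {[]}"
proof -
  have "v = []" if "v \<in> Zs 0 []" for v
  proof -
    have "erase0 v = []" "cnt0 v = 0" using that by (auto simp: Zs_def)
    then show ?thesis using erase0_Nil_rep[of v] by simp
  qed
  then show ?thesis by (auto simp: Zs_def)
qed

lemma Zs1_Nil: "Zs 1 [] = {[0]}"
proof -
  have "v = [0]" if "v \<in> Zs 1 []" for v
  proof -
    have "erase0 v = []" "cnt0 v = 1" using that by (auto simp: Zs_def)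
    then show ?thesis using erase0_Nil_rep[of v] by simp
  qed
  then show ?thesis by (auto simp: Zs_def erase0_def)
qed

lemma th0_Nil: "th 0 F [] = F []" unfolding th_def Zs0_Nil by simp
lemma th1_Nil: "th 1 F [] = F [0]" unfolding th_def Zs1_Nil by simp

lemma th_Cons:
  assumes z: "\<And>v. v \<noteq> [] \<Longrightarrow> F (0 # v) = 0" and m: "m \<ge> 1"
  shows "th c F (m # u) = th (c + m) (\<lambda>v. F (m # v)) u"
proof -
  have sub: "(#) m ` Zs (c + m) u \<subseteq> Zs c (m # u)"
  proof
    fix x assume "x \<in> (#) m ` Zs (c + m) u"
    then obtain v where v: "v \<in> Zs (c + m) u" "x = m # v" by blast
    then show "x \<in> Zs c (m # u)" using m by (auto simp: Zs_def erase0_Cons)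
  qed
  have "th c F (m # u) = sum F (Zs c (m # u))" by (simp add: th_def)
  also have "\<dots> = sum F ((#) m ` Zs (c + m) u)"
  proof (rule sum.mono_neutral_right[OF Zs_finite sub])
    show "\<forall>x\<in>Zs c (m # u) - (#) m ` Zs (c + m) u. F x = 0"
    proof
      fix x assume x: "x \<in> Zs c (m # u) - (#) m ` Zs (c + m) u"
      then have ex: "erase0 x = m # u" "cnt0 x = weight (m # u) + c" by (auto simp: Zs_def)
      show "F x = 0"
      proof (cases x)
        case Nil then show ?thesis using ex by simp
      next
        case (Cons y v)
        show ?thesis
        proof (cases "y = 0")
          case True
          then have "erase0 v = m # u" using ex Cons by (simp add: erase0_Cons)
          then have "v \<noteq> []" by auto
          then show ?thesis using z Cons True by simp
        next
          case False
          then have "y = m" "erase0 v = u" using ex Cons by (auto simp: erase0_Cons)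
          moreover have "cnt0 v = weight u + (c + m)" using ex Cons False by simp
          ultimately have "x \<in> (#) m ` Zs (c + m) u" using Cons by (auto simp: Zs_def)
          then show ?thesis using x by blast
        qed
      qed
    qed
  qed
  also have "\<dots> = sum (\<lambda>v. F (m # v)) (Zs (c + m) u)"
    by (subst sum.reindex) (auto simp: inj_on_def)
  also have "\<dots> = th (c + m) (\<lambda>v. F (m # v)) u" by (simp add: th_def)
  finally show ?thesis .
qed




lemma sigma1_0Cons: "sigma1 (0 # u) = 0"
  by (simp add: sigma1_def)

lemma sigma1_Nil: "sigma1 [] = 1"
  by (simp add: sigma1_def)

lemma sigma1_mCons: "m \<ge> 1 \<Longrightarrow> sigma1 (m # v) = nc_one v"
  by (auto simp: sigma1_def nc_one_def)

lemma nc_mult_zero_left: "nc_mult (\<lambda>_. 0) G v = 0"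
  by (simp add: nc_mult_def)

lemma tmult_zero_left: "tmult (\<lambda>_. 0) P v = 0"
  by (simp add: tmult_def)

lemma pow_0Cons:
  assumes "\<And>u. F (0 # u) = 0"
  shows "nc_pow F n (0 # u) = 0"
proof (induction n arbitrary: u)
  case 0 then show ?case by (simp add: nc_one_def)
next
  case (Suc n)
  have "(\<lambda>v. F (0 # v)) = (\<lambda>_. 0)" using assms by auto
  then show ?case using Suc by (simp add: nc_mult_Cons nc_mult_zero_left)
qed

lemma pow_Nil: "F [] = 1 \<Longrightarrow> nc_pow F n [] = 1"
  by (induction n) (simp_all add: nc_one_def)

lemma sig_pow_0Cons: "nc_pow sigma1 n (0 # u) = 0"
  by (rule pow_0Cons) (rule sigma1_0Cons)

lemma tmult_one: "tmult nc_one P w = P [] w"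
proof -
  have "tmult nc_one P w = (\<Sum>i\<le>length w. if i = 0 then P [] w else 0)"
    unfolding tmult_def nc_one_def by (rule sum.cong) auto
  then show ?thesis by simp
qed

lemma tmult_diff: "tmult (\<lambda>u. A u - B u) P v = tmult A P v - tmult B P v"
  by (simp add: tmult_def algebra_simps sum_subtractf)

lemma nc_mult_neg_left: "nc_mult (\<lambda>u. - A u) B v = - nc_mult A B v"
  by (simp add: nc_mult_def sum_negf)

lemma tmult_cong: "(\<And>u. A u = A' u) \<Longrightarrow> (\<And>u. P u = P' u) \<Longrightarrow> tmult A P v = tmult A' P' v"
  by (simp add: tmult_def)

lemma nc_mult_cong_prefix:
  "(\<And>l. l \<le> length w \<Longrightarrow> X (take l w) = Y (take l w)) \<Longrightarrow> nc_mult X Z w = nc_mult Y Z w"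
  unfolding nc_mult_def by (rule sum.cong) auto

lemma E_lemma:
  fixes h :: ncs
  assumes h0: "h [] = 1" and hz: "\<And>u. h (0 # u) = 0"
    and hm: "\<And>m u. m \<ge> 1 \<Longrightarrow> h (m # u) = - nc_pow h (Suc m) u"
  shows "tmult (nc_pow h j) (\<lambda>p. nc_pow sigma1 (weight p + j)) w = nc_one w"
proof (induction "length w" arbitrary: w j rule: less_induct)
  case less
  define E where "E j w = tmult (nc_pow h j) (\<lambda>p. nc_pow sigma1 (weight p + j)) w" for j w
  have hpz: "nc_pow h n (0 # u) = 0" for n u by (rule pow_0Cons[of h, OF hz])
  have hpn: "nc_pow h n [] = 1" for n by (rule pow_Nil[of h, OF h0])
  have spn: "nc_pow sigma1 n [] = 1" for n by (rule pow_Nil[of sigma1, OF sigma1_Nil])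
  have hstep: "nc_pow h (Suc j') (m # p) = nc_pow h j' (m # p) - nc_pow h (m + Suc j') p"
    if m: "m \<ge> 1" for j' m p
  proof -
    have "nc_pow h (Suc j') (m # p) = h [] * nc_pow h j' (m # p) + nc_mult (\<lambda>u. h (m # u)) (nc_pow h j') p"
      by (simp add: nc_mult_Cons)
    also have "(\<lambda>u. h (m # u)) = (\<lambda>u. - nc_pow h (Suc m) u)" using hm[OF m] by auto
    also have "nc_mult (\<lambda>u. - nc_pow h (Suc m) u) (nc_pow h j') p = - nc_mult (nc_pow h (Suc m)) (nc_pow h j') p"
      by (rule nc_mult_neg_left)
    also have "nc_mult (nc_pow h (Suc m)) (nc_pow h j') = nc_pow h (m + Suc j')"
      using nc_pow_add[of h "Suc m" j'] by simp
    finally show ?thesis using h0 by simp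
  qed
  show ?case
  proof (induction j)
    case 0
    show ?case by (simp add: tmult_one)
  next
    case (Suc j')
    show ?case
    proof (cases w)
      case Nil then show ?thesis using hpn spn by (simp add: nc_one_def del: nc_pow.simps)
    next
      case (Cons c v)
      show ?thesis
      proof (cases "c = 0")
        case True
        have "(\<lambda>u. nc_pow h (Suc j') (c # u)) = (\<lambda>_. 0)" using True hpz[of "Suc j'"] by (simp del: nc_pow.simps)
        then show ?thesis using Cons True
          by (simp add: tmult_Cons tmult_zero_left sig_pow_0Cons nc_one_def del: nc_pow.simps)
      next
        case False
        then have m: "c \<ge> 1" by simp
        have lv: "length v < length w" using Cons by simp
        have A: "tmult (\<lambda>u. nc_pow h (Suc j') (c # u)) (\<lambda>u. nc_pow sigma1 (weight (c # u) + Suc j')) v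
          = tmult (\<lambda>u. nc_pow h j' (c # u)) (\<lambda>u. nc_pow sigma1 (weight (c # u) + Suc j')) v
            - tmult (nc_pow h (c + Suc j')) (\<lambda>u. nc_pow sigma1 (weight (c # u) + Suc j')) v"
          using hstep[OF m] by (simp only: tmult_diff)
        have B: "tmult (nc_pow h (c + Suc j')) (\<lambda>u. nc_pow sigma1 (weight (c # u) + Suc j')) v = nc_one v"
        proof -
          have "tmult (nc_pow h (c + Suc j')) (\<lambda>u. nc_pow sigma1 (weight (c # u) + Suc j')) v
              = tmult (nc_pow h (c + Suc j')) (\<lambda>p. nc_pow sigma1 (weight p + (c + Suc j'))) v"
            by (rule tmult_cong) (simp_all add: add.assoc add.commute add.left_commute)
          also have "\<dots> = nc_one v" by (rule less[OF lv])
          finally show ?thesis .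
        qed
        have C: "nc_pow sigma1 (Suc j') (c # v) + tmult (\<lambda>u. nc_pow h j' (c # u)) (\<lambda>u. nc_pow sigma1 (weight (c # u) + Suc j')) v
            = tmult (nc_pow h j') (\<lambda>p. nc_pow sigma1 (weight p + Suc j')) (c # v)"
          using hpn by (simp add: tmult_Cons del: nc_pow.simps)
        have D: "tmult (nc_pow h j') (\<lambda>p. nc_pow sigma1 (weight p + Suc j')) (c # v) = sigma1 (c # v)"
        proof -
          have "tmult (nc_pow h j') (\<lambda>p. nc_pow sigma1 (weight p + Suc j')) (c # v)
              = tmult (nc_pow h j') (\<lambda>p. nc_mult (nc_pow sigma1 (weight p + j')) sigma1) (c # v)"
            by (rule tmult_cong) (simp_all add: nc_pow_Suc'[symmetric])
          also have "\<dots> = nc_mult (tmult (nc_pow h j') (\<lambda>p. nc_pow sigma1 (weight p + j'))) sigma1 (c # v)"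
            by (simp add: tmult_assoc)
          also have "\<dots> = nc_mult nc_one sigma1 (c # v)"
          proof (rule nc_mult_cong_prefix)
            fix l assume l: "l \<le> length (c # v)"
            show "tmult (nc_pow h j') (\<lambda>p. nc_pow sigma1 (weight p + j')) (take l (c # v)) = nc_one (take l (c # v))"
            proof (cases "l = length (c # v)")
              case True then show ?thesis using Suc.IH Cons by simp
            next
              case False
              then have "length (take l (c # v)) < length w" using l Cons by simp
              then show ?thesis using less by blast
            qed
          qed
          also have "\<dots> = sigma1 (c # v)" by simp
          finally show ?thesis .
        qed
        have "tmult (nc_pow h (Suc j')) (\<lambda>p. nc_pow sigma1 (weight p + Suc j')) (c # v)
            = nc_pow h (Suc j') [] * nc_pow sigma1 (Suc j') (c # v)
              + tmult (\<lambda>u. nc_pow h (Suc j') (c # u)) (\<lambda>u. nc_pow sigma1 (weight (c # u) + Suc j')) v"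
          by (simp add: tmult_Cons del: nc_pow.simps)
        also have "\<dots> = nc_pow sigma1 (Suc j') (c # v) + tmult (\<lambda>u. nc_pow h j' (c # u)) (\<lambda>u. nc_pow sigma1 (weight (c # u) + Suc j')) v - nc_one v"
          using A B hpn[of "Suc j'"] by (simp del: nc_pow.simps)
        also have "\<dots> = sigma1 (c # v) - nc_one v" using C D by simp
        also have "\<dots> = 0" using sigma1_mCons[OF m] by simp
        finally show ?thesis using Cons by (simp add: nc_one_def)
      qed
    qed
  qed
qed




lemma weight0_Cons: "weight u = 0 \<Longrightarrow> u \<noteq> [] \<Longrightarrow> \<exists>u'. u = 0 # u'"
  by (cases u) auto

lemma K_unique:
  assumes K1: "is_K_family K1" and K2: "is_K_family K2"
  shows "K1 = K2"
proof -
  have spn: "nc_pow sigma1 n [] = 1" for n by (rule pow_Nil[of sigma1, OF sigma1_Nil])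
  have main: "K1 n w = K2 n w" for n w
  proof (induction n arbitrary: w rule: less_induct)
    case (less n)
    show ?case
    proof (cases "weight w = n")
      case False
      then have "K1 n w = 0" "K2 n w = 0" using K1 K2 by (auto simp: is_K_family_def)
      then show ?thesis by simp
    next
      case True
      have diag: "nc_mult (K n) (nc_pow sigma1 n) w = K n w" if KK: "is_K_family K" for K
      proof -
        have "nc_mult (K n) (nc_pow sigma1 n) w = (\<Sum>i\<le>length w. K n (take i w) * nc_pow sigma1 n (drop i w))"
          by (simp add: nc_mult_def)
        also have "\<dots> = K n (take (length w) w) * nc_pow sigma1 n (drop (length w) w)"
        proof (rule sum_single_nz)
          fix i assume i: "i \<in> {..length w}" "i \<noteq> length w"
          show "K n (take i w) * nc_pow sigma1 n (drop i w) = 0"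
          proof (cases "K n (take i w) = 0")
            case False
            then have "weight (take i w) = n" using KK by (auto simp: is_K_family_def)
            then have "weight (drop i w) = 0" using True weight_take_drop[of w i] by simp
            moreover have "drop i w \<noteq> []" using i by simp
            ultimately obtain u' where "drop i w = 0 # u'" using weight0_Cons by blast
            then show ?thesis by (simp add: sig_pow_0Cons)
          qed simp
        qed auto
        also have "\<dots> = K n w" using spn by simp
        finally show ?thesis .
      qed
      have eqs: "sigma1 w = (\<Sum>m\<le>n. nc_mult (K m) (nc_pow sigma1 m) w)" if KK: "is_K_family K" for K
        using KK True by (simp add: is_K_family_def)
      have split: "(\<Sum>m\<le>n. nc_mult (K m) (nc_pow sigma1 m) w) = (\<Sum>m<n. nc_mult (K m) (nc_pow sigma1 m) w) + K n w"
        if KK: "is_K_family K" for K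
        using diag[OF KK] by (simp add: lessThan_Suc_atMost[symmetric])
      have low: "(\<Sum>m<n. nc_mult (K1 m) (nc_pow sigma1 m) w) = (\<Sum>m<n. nc_mult (K2 m) (nc_pow sigma1 m) w)"
      proof (rule sum.cong[OF refl])
        fix m assume "m \<in> {..<n}"
        then have "K1 m = K2 m" using less by auto
        then show "nc_mult (K1 m) (nc_pow sigma1 m) w = nc_mult (K2 m) (nc_pow sigma1 m) w" by simp
      qed
      show ?thesis using eqs[OF K1] eqs[OF K2] split[OF K1] split[OF K2] low by simp
    qed
  qed
  show ?thesis using main by (intro ext) simp
qed

context setting begin

lemma supp_g: "supp 1 g"
  unfolding supp_def
proof (intro allI impI)
  fix v assume "g v \<noteq> 0"
  then obtain t where t: "reduced t" "v = tword t" using gsupp by blast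
  then show "cnt0 v = weight v + 1" using tword_cnt[OF t(1)] by simp
qed

lemma supp_eta: "supp 0 eta"
  unfolding supp_def
proof (intro allI impI)
  fix v assume "eta v \<noteq> 0"
  then have "g (v @ [0]) \<noteq> 0" using eta_val by simp
  then have "cnt0 (v @ [0]) = weight (v @ [0]) + 1" using supp_g unfolding supp_def by blast
  then show "cnt0 v = weight v + 0" by simp
qed

lemma supp_kappa: "supp 1 kappa"
  unfolding supp_def
proof (intro allI impI)
  fix v assume nz: "kappa v \<noteq> 0"
  show "cnt0 v = weight v + 1"
  proof (cases "v = [0]")
    case True then show ?thesis by simp
  next
    case False
    then have "(\<Sum>t\<in>{t. prime_tree t \<and> tword t = v}. (-1::complex) ^ (internal t - 1)) \<noteq> 0"
      using nz by (simp add: kappa_kap kap_def)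
    then have "{t. prime_tree t \<and> tword t = v} \<noteq> {}" by (metis sum.empty)
    then obtain t where t: "prime_tree t" "tword t = v" by blast
    then have "reduced t" by (simp add: prime_tree_def)
    then show ?thesis using tword_cnt t(2) by force
  qed
qed

definition hh :: ncs where "hh = th 0 eta"
definition kk :: ncs where "kk = th 1 kappa"

lemma th_g: "th 1 g = hh"
proof -
  have "th (0 + 1) (nc_mult eta (letter 0)) = nc_mult (th 0 eta) (th 1 (letter 0))"
    by (rule ext, rule th_mult[OF supp_eta supp_letter0])
  then show ?thesis using eta th_letter0 by (simp add: hh_def)
qed

lemma th_gpow: "th m (nc_pow g m) = nc_pow hh m"
  using th_pow[OF supp_g, of m] th_g by simp

lemma hh_Nil: "hh [] = 1"
  by (simp add: hh_def th0_Nil eta_Nil)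

lemma hh_0Cons: "hh (0 # u) = 0"
  by (simp add: hh_def th_0Cons)

lemma hh_Cons: "m \<ge> 1 \<Longrightarrow> hh (m # u) = - nc_pow hh (Suc m) u"
proof -
  assume m: "m \<ge> 1"
  have "hh (m # u) = th (0 + m) (\<lambda>v. eta (m # v)) u"
    unfolding hh_def by (rule th_Cons[OF _ m]) (simp add: eta_0Cons)
  also have "(\<lambda>v. eta (m # v)) = (\<lambda>v. - nc_mult (nc_pow g m) eta v)"
    using eta_Cons[OF m] by auto
  also have "th (0 + m) (\<lambda>v. - nc_mult (nc_pow g m) eta v) u = - th (m + 0) (nc_mult (nc_pow g m) eta) u"
    by (simp add: th_neg)
  also have "th (m + 0) (nc_mult (nc_pow g m) eta) u = nc_mult (th m (nc_pow g m)) (th 0 eta) u"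
    by (rule th_mult[OF _ supp_eta]) (use supp_pow[OF supp_g, of m] in simp)
  also have "\<dots> = nc_mult (nc_pow hh m) hh u" by (simp add: th_gpow hh_def)
  also have "\<dots> = nc_pow hh (Suc m) u" by (simp only: nc_pow_Suc')
  finally show ?thesis .
qed

lemma kappa_Cons: "m \<ge> 1 \<Longrightarrow> kappa (m # v) = nc_mult (nc_pow g m) (letter 0) v"
proof -
  assume m: "m \<ge> 1"
  show ?thesis
  proof (cases "\<exists>v'. v = v' @ [0]")
    case True
    then obtain v' where v: "v = v' @ [0]" by blast
    have "kappa (m # v) = kap (m # v' @ [0])" using v by (simp add: kappa_kap)
    also have "\<dots> = nc_pow g m v'" by (rule kap_Cons[of g, OF gsupp gval m])
    also have "\<dots> = nc_mult (nc_pow g m) (letter 0) v" using v by (simp add: nc_mult_letter0)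
    finally show ?thesis .
  next
    case False
    have "\<forall>x. m # v \<noteq> x @ [0]"
    proof (intro allI notI)
      fix x assume e: "m # v = x @ [0]"
      show False
      proof (cases x)
        case Nil then show False using e m by simp
      next
        case (Cons y x') then show False using e False by auto
      qed
    qed
    then have "kappa (m # v) = 0" unfolding kappa by (intro nc_mult_letter0_z) blast
    moreover have "nc_mult (nc_pow g m) (letter 0) v = 0"
      by (rule nc_mult_letter0_z) (use False in blast)
    ultimately show ?thesis by simp
  qed
qed

lemma kk_Nil: "kk [] = 1"
  unfolding kk_def th1_Nil by (simp add: kappa_kap kap_single)

lemma kk_0Cons: "kk (0 # u) = 0"
  by (simp add: kk_def th_0Cons)

lemma kk_Cons: "m \<ge> 1 \<Longrightarrow> kk (m # u) = nc_pow hh m u"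
proof -
  assume m: "m \<ge> 1"
  have "kk (m # u) = th (1 + m) (\<lambda>v. kappa (m # v)) u"
    unfolding kk_def by (rule th_Cons[OF _ m]) (simp add: kappa_kap kap_0Cons)
  also have "(\<lambda>v. kappa (m # v)) = nc_mult (nc_pow g m) (letter 0)"
    using kappa_Cons[OF m] by auto
  also have "th (1 + m) (nc_mult (nc_pow g m) (letter 0)) u = th (m + 1) (nc_mult (nc_pow g m) (letter 0)) u"
    by (simp add: add.commute)
  also have "\<dots> = nc_mult (th m (nc_pow g m)) (th 1 (letter 0)) u"
    by (rule th_mult[OF _ supp_letter0]) (use supp_pow[OF supp_g, of m] in simp)
  also have "\<dots> = nc_pow hh m u" by (simp only: th_gpow th_letter0 nc_one_right)
  finally show ?thesis .
qed

lemma K_ident: "sigma1 w = tmult kk (\<lambda>p. nc_pow sigma1 (weight p)) w"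
proof (cases w)
  case Nil then show ?thesis by (simp add: kk_Nil sigma1_Nil nc_one_def)
next
  case (Cons c v)
  show ?thesis
  proof (cases "c = 0")
    case True
    have "(\<lambda>u. kk (c # u)) = (\<lambda>_. 0)" using True kk_0Cons by auto
    then show ?thesis using Cons True
      by (simp add: tmult_Cons tmult_zero_left sigma1_0Cons kk_Nil nc_one_def)
  next
    case False
    then have m: "c \<ge> 1" by simp
    have "tmult kk (\<lambda>p. nc_pow sigma1 (weight p)) (c # v)
        = kk [] * nc_one (c # v) + tmult (\<lambda>u. kk (c # u)) (\<lambda>u. nc_pow sigma1 (weight (c # u))) v"
      by (simp add: tmult_Cons)
    also have "\<dots> = tmult (nc_pow hh c) (\<lambda>p. nc_pow sigma1 (weight p + c)) v"
      by (simp add: nc_one_def kk_Cons[OF m] add.commute cong: tmult_cong)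
    also have "\<dots> = nc_one v" by (rule E_lemma[OF hh_Nil hh_0Cons hh_Cons])
    also have "\<dots> = sigma1 (c # v)" using sigma1_mCons[OF m] by simp
    finally show ?thesis using Cons by simp
  qed
qed

definition Kf :: "nat \<Rightarrow> ncs" where "Kf n u = (if weight u = n then kk u else 0)"

lemma Kf_family: "is_K_family Kf"
  unfolding is_K_family_def
proof (intro conjI allI impI)
  show "Kf 0 = nc_one"
  proof (rule ext)
    fix u :: "nat list"
    show "Kf 0 u = nc_one u"
    proof (cases "u = []")
      case True then show ?thesis by (simp add: Kf_def kk_Nil nc_one_def)
    next
      case False
      show ?thesis
      proof (cases "weight u = 0")
        case True
        then obtain u' where "u = 0 # u'" using weight0_Cons False by blast
        then show ?thesis by (simp add: Kf_def kk_0Cons nc_one_def)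
      next
        case False2: False
        have "Kf 0 u = 0" unfolding Kf_def by (simp only: False2 if_False)
        then show ?thesis using False by (simp add: nc_one_def)
      qed
    qed
  qed
next
  fix n w assume nz: "Kf n w \<noteq> 0"
  then show "weight w = n" by (auto simp: Kf_def split: if_splits)
next
  fix n w assume nz: "Kf n w \<noteq> 0"
  then have w: "kk w \<noteq> 0" by (auto simp: Kf_def split: if_splits)
  then have "Zs 1 w \<noteq> {}" by (auto simp: kk_def th_def)
  then obtain v where "erase0 v = w" by (auto simp: Zs_def)
  then show "0 \<notin> set w" using zero_notin_erase0 by blast
next
  fix w :: "nat list"
  have "(\<Sum>n\<le>weight w. nc_mult (Kf n) (nc_pow sigma1 n) w)
      = (\<Sum>n\<le>weight w. \<Sum>i\<le>length w. Kf n (take i w) * nc_pow sigma1 n (drop i w))"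
    by (simp add: nc_mult_def)
  also have "\<dots> = (\<Sum>i\<le>length w. \<Sum>n\<le>weight w. Kf n (take i w) * nc_pow sigma1 n (drop i w))"
    by (rule sum.swap)
  also have "\<dots> = (\<Sum>i\<le>length w. kk (take i w) * nc_pow sigma1 (weight (take i w)) (drop i w))"
  proof (rule sum.cong[OF refl])
    fix i
    have le: "weight (take i w) \<le> weight w" using weight_take_drop[of w i] by simp
    have "(\<Sum>n\<le>weight w. Kf n (take i w) * nc_pow sigma1 n (drop i w))
        = (\<Sum>n\<le>weight w. if weight (take i w) = n then kk (take i w) * nc_pow sigma1 n (drop i w) else 0)"
      by (rule sum.cong) (auto simp: Kf_def)
    also have "\<dots> = kk (take i w) * nc_pow sigma1 (weight (take i w)) (drop i w)"
      using le by (simp add: sum.delta)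
    finally show "(\<Sum>n\<le>weight w. Kf n (take i w) * nc_pow sigma1 n (drop i w)) = kk (take i w) * nc_pow sigma1 (weight (take i w)) (drop i w)" .
  qed
  also have "\<dots> = tmult kk (\<lambda>p. nc_pow sigma1 (weight p)) w" by (simp add: tmult_def)
  also have "\<dots> = sigma1 w" by (rule K_ident[symmetric])
  finally show "sigma1 w = (\<Sum>n\<le>weight w. nc_mult (Kf n) (nc_pow sigma1 n) w)" by simp
qed

lemma K_fam_eq: "K_fam = Kf"
  unfolding K_fam_def
proof (rule the_equality)
  show "is_K_family Kf" by (rule Kf_family)
  show "\<And>K. is_K_family K \<Longrightarrow> K = Kf" using K_unique Kf_family by blast
qed

lemma part_a: "(kappa has_sum K_series u) {v. erase0 v = u}"
proof (rule has_sum_finite_neutralI[OF Zs_finite])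
  show "Zs 1 u \<subseteq> {v. erase0 v = u}" by (auto simp: Zs_def)
  show "kappa v = 0" if "v \<in> {v. erase0 v = u} - Zs 1 u" for v
  proof (rule ccontr)
    assume "kappa v \<noteq> 0"
    then have "cnt0 v = weight v + 1" using supp_kappa by (simp add: supp_def)
    moreover have "erase0 v = u" using that by simp
    ultimately have "v \<in> Zs 1 u" by (auto simp: Zs_def)
    then show False using that by simp
  qed
  show "K_series u = sum kappa (Zs 1 u)"
    by (simp add: K_series_def K_fam_eq Kf_def kk_def th_def)
qed

end

theorem mainTheorem2:
  fixes g eta eta_inv kappa :: ncs
  assumes g_grp: "g \<in> schroder_group"
      and g_inv: "schroder_comp f_c g = letter 0" "schroder_comp g f_c = letter 0"
      and eta: "g = nc_mult eta (letter 0)"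
      and eta_inv: "nc_mult eta eta_inv = nc_one" "nc_mult eta_inv eta = nc_one"
      and kappa: "kappa = nc_mult eta_inv (letter 0)"
  shows "(\<forall>u. (kappa has_sum K_series u) {v. erase0 v = u})
       \<and> (\<forall>n\<ge>1. \<forall>w. weight w = n \<longrightarrow>
            kappa w = (\<Sum>t\<in>PST n. if tword t = w then (-1) ^ (internal t - 1) else 0))"
proof -
  interpret S: setting g eta eta_inv kappa
    using g_grp g_inv(1) eta eta_inv(2) kappa by (unfold_locales) auto
  show ?thesis using S.part_a S.part_b by blast
qed



end
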